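(* There are constants $k$ and $C$ such that the following holds. Let $p>2$ be prime, $\Gamma_0$ a $3$-regular connected graph, $\Gamma_1 = \mathrm{CFI}(\Gamma_0)$, $\Gamma_2 = \widetilde{\mathrm{CFI}(\Gamma_0)}$, and for $i\in\{1,2\}$ let $G_i = G_{\Gamma_i}$ be the group from Mekler's construction, $n=|G_i|$. Let $u, v \in G_{i}$ with $|\mathrm{supp}(u)| = 1$ and $|\mathrm{supp}(v)| > 1$. In the count-free Version I pebble game on $(G_i, G_i)$, from a position in which $u \mapsto v$ has been pebbled, Spoiler can win using at most $k$ additional pebble pairs within $C\log \log n + C$ additional rounds.
   Context: CFI construction: for a connected graph $\Gamma_0$, each vertex $v$ of degree $d$ is replaced by a gadget with external vertices $a_1^v,b_1^v,\ldots,a_d^v,b_d^v$ (pair $i$ associated to the $i$-th edge at $v$) and internal vertices indexed by strings in $\{0,1\}^d$ with an even number of $1$'s, the internal vertex with string $s$ adjacent to $a_i^v$ if $s_i=0$ and to $b_i^v$ otherwise; for each edge $xy$ of $\Gamma_0$ with associated pairs $(a_i^x,b_i^x),(a_j^y,b_j^y)$ add edges $a_i^xa_j^y$, $b_i^xb_j^y$ to get $\mathrm{CFI}(\Gamma_0)$; $\widetilde{\mathrm{CFI}(\Gamma_0)}$ instead uses $a_i^xb_j^y$, $b_i^xa_j^y$ for one edge of $\Gamma_0$. Mekler's construction: for a simple graph $\Gamma$ on $v_1,\ldots,v_m$, $G_\Gamma = \langle x_1,\ldots,x_m \mid x_i^p=1, [[x_i,x_j],x_k]=1, [x_i,x_j]=1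 \text{ if } v_iv_j\in E(\Gamma)\rangle$; every element is $x_1^{d_1}\cdots x_m^{d_m}c$ with $c$ in the commutator subgroup and the $d_i$ unique mod $p$; $\mathrm{supp}(x)=\{v_i: d_i\not\equiv 0 \pmod p\}$. Count-free Version I pebble game on groups $G,H$: each round Spoiler picks up a pebble pair, the winning condition is checked, Spoiler places one pebble of the pair on an element of either group and Duplicator places the partner on an element of the other group; Spoiler wins when the map $g_i\mapsto h_i$ between pebbled elements fails to satisfy, for all $i,j,t$: $g_i=g_j\iff h_i=h_j$ and $g_ig_j=g_t\iff h_ih_j=h_t$. *)

theory Defs
  imports "HOL-Algebra.Algebra" Complex_Main
begin

definition simple_graph :: "'v set \<Rightarrow> ('v \<Rightarrow> 'v \<Rightarrow> bool) \<Rightarrow> bool" where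
  "simple_graph V E \<longleftrightarrow> finite V \<and> (\<forall>x y. E x y \<longrightarrow> x \<in> V \<and> y \<in> V)
     \<and> (\<forall>x y. E x y \<longrightarrow> E y x) \<and> (\<forall>x. \<not> E x x)"

definition graph_connected :: "'v set \<Rightarrow> ('v \<Rightarrow> 'v \<Rightarrow> bool) \<Rightarrow> bool" where
  "graph_connected V E \<longleftrightarrow> V \<noteq> {} \<and> (\<forall>x\<in>V. \<forall>y\<in>V. (x, y) \<in> {(a, b). E a b}\<^sup>*)"

definition regular3 :: "'v set \<Rightarrow> ('v \<Rightarrow> 'v \<Rightarrow> bool) \<Rightarrow> bool" where
  "regular3 V E \<longleftrightarrow> (\<forall>x\<in>V. card {y. E x y} = 3)"

text \<open>Ext v w False is the external vertex a associated to the edge vw at v,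
  Ext v w True the external vertex b. Inner v S is the internal vertex of the gadget at v
  whose string has 1's exactly at the neighbours in S.\<close>
datatype 'v cfi_vert = Ext 'v 'v bool | Inner 'v "'v set"

definition cfi_V :: "'v set \<Rightarrow> ('v \<Rightarrow> 'v \<Rightarrow> bool) \<Rightarrow> 'v cfi_vert set" where
  "cfi_V V E = {Ext v w b | v w b. v \<in> V \<and> E v w}
      \<union> {Inner v S | v S. v \<in> V \<and> S \<subseteq> {w. E v w} \<and> even (card S)}"

text \<open>T is the set of twisted edges of the base graph: T = {} gives CFI(Gamma0),
  T = {{x,y}} for an edge xy gives the twisted graph.\<close>
definition cfi_E :: "'v set \<Rightarrow> ('v \<Rightarrow> 'v \<Rightarrow> bool) \<Rightarrow> 'v set set
    \<Rightarrow> 'v cfi_vert \<Rightarrow> 'v cfi_vert \<Rightarrow> bool" where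
  "cfi_E V E T x y \<longleftrightarrow> x \<in> cfi_V V E \<and> y \<in> cfi_V V E \<and>
     ((\<exists>v S w b. x = Inner v S \<and> y = Ext v w b \<and> (b \<longleftrightarrow> w \<in> S))
    \<or> (\<exists>v S w b. y = Inner v S \<and> x = Ext v w b \<and> (b \<longleftrightarrow> w \<in> S))
    \<or> (\<exists>v w b b'. x = Ext v w b \<and> y = Ext w v b' \<and> (b' \<longleftrightarrow> (b \<noteq> ({v, w} \<in> T)))))"

text \<open>Words over the generators; since every generator has order p, the inverse of x
  is x^(p-1), and the group is presented as a monoid.\<close>
definition winv :: "nat \<Rightarrow> 'v list \<Rightarrow> 'v list" where
  "winv p w = concat (map (\<lambda>x. replicate (p - 1) x) (rev w))"

definition wcomm :: "nat \<Rightarrow> 'v list \<Rightarrow> 'v list \<Rightarrow> 'v list" where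
  "wcomm p a b = winv p a @ winv p b @ a @ b"

inductive meq :: "nat \<Rightarrow> 'v set \<Rightarrow> ('v \<Rightarrow> 'v \<Rightarrow> bool) \<Rightarrow> 'v list \<Rightarrow> 'v list \<Rightarrow> bool"
  for p V E where
  refl: "w \<in> lists V \<Longrightarrow> meq p V E w w"
| sym: "meq p V E a b \<Longrightarrow> meq p V E b a"
| trans: "meq p V E a b \<Longrightarrow> meq p V E b c \<Longrightarrow> meq p V E a c"
| cong: "meq p V E a b \<Longrightarrow> meq p V E c d \<Longrightarrow> meq p V E (a @ c) (b @ d)"
| pow: "x \<in> V \<Longrightarrow> meq p V E (replicate p x) []"
| cls2: "x \<in> V \<Longrightarrow> y \<in> V \<Longrightarrow> z \<in> V \<Longrightarrow> meq p V E (wcomm p (wcomm p [x] [y]) [z]) []"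
| edge: "x \<in> V \<Longrightarrow> y \<in> V \<Longrightarrow> E x y \<Longrightarrow> meq p V E (wcomm p [x] [y]) []"

definition meq_class :: "nat \<Rightarrow> 'v set \<Rightarrow> ('v \<Rightarrow> 'v \<Rightarrow> bool) \<Rightarrow> 'v list \<Rightarrow> 'v list set" where
  "meq_class p V E w = {w' \<in> lists V. meq p V E w w'}"

definition mekler :: "nat \<Rightarrow> 'v set \<Rightarrow> ('v \<Rightarrow> 'v \<Rightarrow> bool) \<Rightarrow> 'v list set monoid" where
  "mekler p V E = \<lparr> carrier = meq_class p V E ` lists V,
      monoid.mult = (\<lambda>A B. meq_class p V E ((SOME a. a \<in> A) @ (SOME b. b \<in> B))),
      monoid.one = meq_class p V E [] \<rparr>"

definition mgen :: "nat \<Rightarrow> 'v set \<Rightarrow> ('v \<Rightarrow> 'v \<Rightarrow> bool) \<Rightarrow> 'v \<Rightarrow> 'v list set" where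
  "mgen p V E x = meq_class p V E [x]"

definition msupp :: "nat \<Rightarrow> 'v set \<Rightarrow> ('v \<Rightarrow> 'v \<Rightarrow> bool) \<Rightarrow> 'v list set \<Rightarrow> 'v set" where
  "msupp p V E g = {v \<in> V. \<exists>vs d c. distinct vs \<and> set vs = V \<and> (\<forall>w. d w < p) \<and> d v \<noteq> 0
      \<and> c \<in> derived (mekler p V E) (carrier (mekler p V E))
      \<and> g = foldr (\<lambda>w acc. (mgen p V E w [^]\<^bsub>mekler p V E\<^esub> (d w)) \<otimes>\<^bsub>mekler p V E\<^esub> acc) vs
               \<one>\<^bsub>mekler p V E\<^esub> \<otimes>\<^bsub>mekler p V E\<^esub> c}"

definition pebble_ok :: "('g, 'a) monoid_scheme \<Rightarrow> ('h, 'b) monoid_scheme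
    \<Rightarrow> (nat \<Rightarrow> ('g \<times> 'h) option) \<Rightarrow> bool" where
  "pebble_ok G H pos \<longleftrightarrow> (\<forall>i j t gi hi gj hj gt ht.
      pos i = Some (gi, hi) \<longrightarrow> pos j = Some (gj, hj) \<longrightarrow> pos t = Some (gt, ht) \<longrightarrow>
      ((gi = gj \<longleftrightarrow> hi = hj) \<and> (gi \<otimes>\<^bsub>G\<^esub> gj = gt \<longleftrightarrow> hi \<otimes>\<^bsub>H\<^esub> hj = ht)))"

text \<open>In each round Spoiler picks up a pair i (placed or not),
  places one of its pebbles on an element of G or of H, and Duplicator answers in the
  other group. (Picking up pebbles never creates a violation, so checking the winning
  condition at the current position is equivalent to checking it after pick-up.)\<close>
fun spoiler_wins :: "('g, 'a) monoid_scheme \<Rightarrow> ('h, 'b) monoid_scheme \<Rightarrow> nat \<Rightarrow> nat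
    \<Rightarrow> (nat \<Rightarrow> ('g \<times> 'h) option) \<Rightarrow> bool" where
  "spoiler_wins G H k 0 pos = (\<not> pebble_ok G H pos)"
| "spoiler_wins G H k (Suc r) pos = (\<not> pebble_ok G H pos \<or>
     (\<exists>i\<le>k. (\<exists>g\<in>carrier G. \<forall>h\<in>carrier H. spoiler_wins G H k r (pos(i := Some (g, h))))
           \<or> (\<exists>h\<in>carrier H. \<forall>g\<in>carrier G. spoiler_wins G H k r (pos(i := Some (g, h))))))"

end

theory Submission
  imports Defs "HOL-Number_Theory.Cong"
begin


locale mk =
  fixes p :: nat and XX :: "'v set" and R :: "'v \<Rightarrow> 'v \<Rightarrow> bool"
  assumes pp: "Factorial_Ring.prime p" and p2: "2 < p"
begin


lemma winv_Cons: "winv p (x#w) = winv p w @ replicate (p-1) x"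
  by (simp add: winv_def)

lemma winv_Nil[simp]: "winv p [] = []" by (simp add: winv_def)

lemma set_winv: "set (winv p w) \<subseteq> set w"
  by (induct w) (simp_all add: winv_Cons, fastforce)

lemma winv_lists: "w \<in> lists XX \<Longrightarrow> winv p w \<in> lists XX"
  using set_winv[of w] by (simp add: lists_eq_set)

lemma rep_lists: "x \<in> XX \<Longrightarrow> replicate n x \<in> lists XX"
  by (induct n) auto

lemma wcomm_lists: "a \<in> lists XX \<Longrightarrow> b \<in> lists XX \<Longrightarrow> wcomm p a b \<in> lists XX"
  by (simp add: wcomm_def winv_lists)

lemma meq_lists: "meq p XX R a b \<Longrightarrow> a \<in> lists XX \<and> b \<in> lists XX"
  by (induct rule: meq.induct) (simp_all add: wcomm_lists rep_lists)

lemma cl_eq: "meq p XX R a b \<Longrightarrow> meq_class p XX R a = meq_class p XX R b"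
  unfolding meq_class_def using meq.sym meq.trans by blast

lemma cl_mem: "w \<in> lists XX \<Longrightarrow> w \<in> meq_class p XX R w"
  by (simp add: meq_class_def meq.refl)

lemma cl_eqD: "a \<in> lists XX \<Longrightarrow> meq_class p XX R a = meq_class p XX R b \<Longrightarrow> meq p XX R b a"
  using cl_mem[of a] by (auto simp: meq_class_def)

lemma mult_cl: assumes "a \<in> lists XX" "b \<in> lists XX"
  shows "meq_class p XX R a \<otimes>\<^bsub>(mekler p XX R)\<^esub> meq_class p XX R b = meq_class p XX R (a @ b)"
proof -
  define a' where "a' = (SOME a'. a' \<in> meq_class p XX R a)"
  define b' where "b' = (SOME b'. b' \<in> meq_class p XX R b)"
  have "a' \<in> meq_class p XX R a" unfolding a'_def by (rule someI, rule cl_mem[OF assms(1)])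
  hence 1: "meq p XX R a a'" by (simp add: meq_class_def)
  have "b' \<in> meq_class p XX R b" unfolding b'_def by (rule someI, rule cl_mem[OF assms(2)])
  hence 2: "meq p XX R b b'" by (simp add: meq_class_def)
  have "meq p XX R (a @ b) (a' @ b')" by (rule meq.cong[OF 1 2])
  hence "meq_class p XX R (a' @ b') = meq_class p XX R (a @ b)" using cl_eq by metis
  thus ?thesis by (simp add: mekler_def a'_def b'_def)
qed

lemma one_G: "\<one>\<^bsub>(mekler p XX R)\<^esub> = meq_class p XX R []" by (simp add: mekler_def)
lemma carrier_G: "carrier (mekler p XX R) = meq_class p XX R ` lists XX" by (simp add: mekler_def)

lemma M_cancel_mid: assumes "a \<in> lists XX" "b \<in> lists XX" "meq p XX R c []"
  shows "meq p XX R (a @ c @ b) (a @ b)"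
  using meq.cong[OF meq.refl[OF assms(1)] meq.cong[OF assms(3) meq.refl[OF assms(2)]]] by simp

lemma winv_cancel: "w \<in> lists XX \<Longrightarrow> meq p XX R (winv p w @ w) []"
proof (induct w)
  case Nil thus ?case by (simp add: meq.refl)
next
  case (Cons x w)
  have p1: "p = Suc (p - 1)" using p2 by simp
  have e: "winv p (x # w) @ x # w = winv p w @ replicate p x @ w"
  proof -
    have "replicate (p - 1) x @ x # w = replicate (Suc (p - 1)) x @ w"
      by (simp add: replicate_app_Cons_same)
    also have "\<dots> = replicate p x @ w" using p1 by simp
    finally show ?thesis by (simp add: winv_Cons)
  qed
  have m1: "meq p XX R (winv p w @ replicate p x @ w) (winv p w @ w)"
    using Cons.prems by (intro M_cancel_mid winv_lists meq.pow) auto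
  have m2: "meq p XX R (winv p w @ w) []" using Cons by simp
  show ?case unfolding e by (rule meq.trans[OF m1 m2])
qed

lemma group_G: "group (mekler p XX R)"
proof (rule groupI)
  fix x y assume "x \<in> carrier (mekler p XX R)" "y \<in> carrier (mekler p XX R)"
  then obtain a b where "a \<in> lists XX" "b \<in> lists XX" "x = meq_class p XX R a" "y = meq_class p XX R b" by (auto simp: carrier_G)
  thus "x \<otimes>\<^bsub>(mekler p XX R)\<^esub> y \<in> carrier (mekler p XX R)" by (simp add: mult_cl carrier_G)
next
  show "\<one>\<^bsub>(mekler p XX R)\<^esub> \<in> carrier (mekler p XX R)" by (simp add: one_G carrier_G)
next
  fix x y z assume "x \<in> carrier (mekler p XX R)" "y \<in> carrier (mekler p XX R)" "z \<in> carrier (mekler p XX R)"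
  then obtain a b c where "a \<in> lists XX" "b \<in> lists XX" "c \<in> lists XX" "x = meq_class p XX R a" "y = meq_class p XX R b" "z = meq_class p XX R c"
    by (auto simp: carrier_G)
  thus "x \<otimes>\<^bsub>(mekler p XX R)\<^esub> y \<otimes>\<^bsub>(mekler p XX R)\<^esub> z = x \<otimes>\<^bsub>(mekler p XX R)\<^esub> (y \<otimes>\<^bsub>(mekler p XX R)\<^esub> z)" by (simp add: mult_cl)
next
  fix x assume "x \<in> carrier (mekler p XX R)"
  then obtain a where "a \<in> lists XX" "x = meq_class p XX R a" by (auto simp: carrier_G)
  thus "\<one>\<^bsub>(mekler p XX R)\<^esub> \<otimes>\<^bsub>(mekler p XX R)\<^esub> x = x" by (simp add: mult_cl one_G)
next
  fix x assume "x \<in> carrier (mekler p XX R)"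
  then obtain a where a: "a \<in> lists XX" "x = meq_class p XX R a" by (auto simp: carrier_G)
  show "\<exists>y\<in>carrier (mekler p XX R). y \<otimes>\<^bsub>(mekler p XX R)\<^esub> x = \<one>\<^bsub>(mekler p XX R)\<^esub>"
  proof -
    have "meq_class p XX R (winv p a @ a) = meq_class p XX R []" by (rule cl_eq[OF winv_cancel[OF a(1)]])
    hence "meq_class p XX R (winv p a) \<otimes>\<^bsub>mekler p XX R\<^esub> x = \<one>\<^bsub>mekler p XX R\<^esub>"
      using a winv_lists[OF a(1)] by (simp add: mult_cl one_G)
    moreover have "meq_class p XX R (winv p a) \<in> carrier (mekler p XX R)"
      using winv_lists[OF a(1)] by (simp add: carrier_G)
    ultimately show ?thesis by blast
  qed
qed



end


definition cnt :: "'v \<Rightarrow> 'v list \<Rightarrow> int" where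
  "cnt i w = int (length (filter (\<lambda>x. x = i) w))"

fun qq :: "'v \<Rightarrow> 'v \<Rightarrow> 'v list \<Rightarrow> int" where
  "qq i j [] = 0"
| "qq i j (x # w) = (if x = i then cnt j w else 0) + qq i j w"

definition chi :: "'v \<Rightarrow> 'v \<Rightarrow> 'v list \<Rightarrow> int" where
  "chi i j w = qq i j w - qq j i w"

definition cr :: "'v \<Rightarrow> 'v \<Rightarrow> 'v list \<Rightarrow> 'v list \<Rightarrow> int" where
  "cr i j a b = cnt i a * cnt j b - cnt j a * cnt i b"

lemma cnt_Nil[simp]: "cnt i [] = 0" by (simp add: cnt_def)
lemma cnt_Cons[simp]: "cnt i (x # w) = (if x = i then 1 else 0) + cnt i w" by (simp add: cnt_def)
lemma cnt_append[simp]: "cnt i (a @ b) = cnt i a + cnt i b" by (simp add: cnt_def)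
lemma cnt_replicate[simp]: "cnt i (replicate n x) = (if x = i then int n else 0)"
  by (induct n) auto


lemma qq_append: "qq i j (a @ b) = qq i j a + qq i j b + cnt i a * cnt j b"
  by (induct a) (auto simp: algebra_simps)

lemma qq_replicate: "i \<noteq> j \<Longrightarrow> qq i j (replicate n x) = 0"
  by (induct n) auto

lemma chi_append: "chi i j (a @ b) = chi i j a + chi i j b + cr i j a b"
  by (simp add: chi_def cr_def qq_append)

lemma chi_Nil[simp]: "chi i j [] = 0" by (simp add: chi_def)

lemma dvd_trans3: "(m::int) dvd (a - b) \<Longrightarrow> m dvd (b - c) \<Longrightarrow> m dvd (a - c)"
  using dvd_add[of m "a - b" "b - c"] by simp

lemma dvd_mult_cong: "(m::int) dvd (x - x') \<Longrightarrow> m dvd (y - y') \<Longrightarrow> m dvd (x * y - x' * y')"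
proof -
  assume a: "m dvd (x - x')" "m dvd (y - y')"
  have "x * y - x' * y' = x * (y - y') + y' * (x - x')" by (simp add: algebra_simps)
  thus ?thesis using a by (simp add: dvd_add)
qed

context mk
begin

lemma p1: "1 \<le> p" using p2 by simp

lemma int_pm1[simp]: "int (p - Suc 0) = int p - 1" using p1 by (simp add: of_nat_diff)

lemma cnt_winv: "cnt i (winv p w) = (int p - 1) * cnt i w"
  by (induct w) (auto simp: winv_Cons algebra_simps)

lemma qq_winv: "i \<noteq> j \<Longrightarrow> int p dvd (qq i j (winv p w) - qq j i w)"
proof (induct w)
  case Nil thus ?case by simp
next
  case (Cons x w)
  have e: "qq i j (winv p (x # w)) - qq j i (x # w) =
     (qq i j (winv p w) - qq j i w) + (if x = j then ((int p - 1) * (int p - 1) - 1) * cnt i w else 0)"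
    using Cons.prems by (auto simp: winv_Cons qq_append qq_replicate cnt_winv algebra_simps)
  have f: "(int p - 1) * (int p - 1) - 1 = int p * (int p - 2)" by (simp add: algebra_simps)
  show ?case unfolding e f using Cons by (auto intro: dvd_add)
qed

lemma chi_winv: "i \<noteq> j \<Longrightarrow> int p dvd (chi i j (winv p w) + chi i j w)"
proof -
  assume ij: "i \<noteq> j"
  have "chi i j (winv p w) + chi i j w = (qq i j (winv p w) - qq j i w) - (qq j i (winv p w) - qq i j w)"
    by (simp add: chi_def)
  thus ?thesis using qq_winv[OF ij, of w] qq_winv[of j i w] ij by (simp add: dvd_diff)
qed

lemma cr_winv1: "cr i j (winv p a) b = (int p - 1) * cr i j a b"
  by (simp add: cr_def cnt_winv algebra_simps)
lemma cr_winv2: "cr i j a (winv p b) = (int p - 1) * cr i j a b"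
  by (simp add: cr_def cnt_winv algebra_simps)
lemma cr_app1: "cr i j (a @ b) c = cr i j a c + cr i j b c"
  by (simp add: cr_def algebra_simps)
lemma cr_app2: "cr i j a (b @ c) = cr i j a b + cr i j a c"
  by (simp add: cr_def algebra_simps)

lemma chi_wcomm: "chi i j (wcomm p a b) = (chi i j (winv p a) + chi i j a) + (chi i j (winv p b) + chi i j b)
   + ((int p - 1) * (int p - 1) + 1) * cr i j a b"
  by (simp add: wcomm_def chi_append cr_app1 cr_app2 cr_winv1 cr_winv2)
     (simp add: cr_def algebra_simps)

lemma cnt_wcomm: "cnt i (wcomm p a b) = int p * (cnt i a + cnt i b)"
  by (simp add: wcomm_def cnt_winv algebra_simps)

lemma meq_inv: "meq p XX R a b \<Longrightarrow> (\<forall>i. int p dvd (cnt i a - cnt i b)) \<and>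
   (\<forall>i j. i \<noteq> j \<longrightarrow> \<not> R i j \<longrightarrow> \<not> R j i \<longrightarrow> int p dvd (chi i j a - chi i j b))"
proof (induct rule: meq.induct)
  case (refl w) thus ?case by simp
next
  case (sym a b) thus ?case by (simp add: dvd_diff_commute)
next
  case (trans a b c) thus ?case by (meson dvd_trans3)
next
  case (cong a b c d)
  have 1: "\<forall>i. int p dvd (cnt i (a @ c) - cnt i (b @ d))"
  proof
    fix i
    have "cnt i (a @ c) - cnt i (b @ d) = (cnt i a - cnt i b) + (cnt i c - cnt i d)" by simp
    thus "int p dvd (cnt i (a @ c) - cnt i (b @ d))" using cong by (metis dvd_add)
  qed
  have 2: "int p dvd (chi i j (a @ c) - chi i j (b @ d))" if "i \<noteq> j" "\<not> R i j" "\<not> R j i" for i j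
  proof -
    have e: "chi i j (a @ c) - chi i j (b @ d) = (chi i j a - chi i j b) + (chi i j c - chi i j d)
        + ((cnt i a * cnt j c - cnt i b * cnt j d) - (cnt j a * cnt i c - cnt j b * cnt i d))"
      by (simp add: chi_append cr_def)
    have h1: "int p dvd (chi i j a - chi i j b)" using cong that by blast
    have h2: "int p dvd (chi i j c - chi i j d)" using cong that by blast
    have h3: "int p dvd (cnt i a * cnt j c - cnt i b * cnt j d)" using cong by (intro dvd_mult_cong) auto
    have h4: "int p dvd (cnt j a * cnt i c - cnt j b * cnt i d)" using cong by (intro dvd_mult_cong) auto
    show ?thesis unfolding e by (rule dvd_add[OF dvd_add[OF h1 h2] dvd_diff[OF h3 h4]])
  qed
  show ?case using 1 2 by blast
next
  case (pow x)
  show ?case by (auto simp: chi_def qq_replicate)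
next
  case (cls2 x y z)
  have 1: "\<forall>i. int p dvd (cnt i (wcomm p (wcomm p [x] [y]) [z]) - cnt i [])"
    by (simp add: cnt_wcomm)
  have 2: "int p dvd (chi i j (wcomm p (wcomm p [x] [y]) [z]))" if "i \<noteq> j" for i j
  proof -
    have "int p dvd cr i j (wcomm p [x] [y]) [z]"
      by (simp add: cr_def cnt_wcomm)
    hence t3: "int p dvd ((int p - 1) * (int p - 1) + 1) * cr i j (wcomm p [x] [y]) [z]"
      by (rule dvd_mult)
    show ?thesis
      by (subst chi_wcomm) (rule dvd_add[OF dvd_add[OF chi_winv[OF that] chi_winv[OF that]] t3])
  qed
  show ?case using 1 2 by simp
next
  case (edge x y)
  have 1: "\<forall>i. int p dvd (cnt i (wcomm p [x] [y]) - cnt i [])"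
    by (simp add: cnt_wcomm)
  have 2: "int p dvd (chi i j (wcomm p [x] [y]))" if "i \<noteq> j" "\<not> R i j" "\<not> R j i" for i j
  proof -
    have "cr i j [x] [y] = 0" using that edge by (auto simp: cr_def)
    hence t3: "int p dvd ((int p - 1) * (int p - 1) + 1) * cr i j [x] [y]" by simp
    show ?thesis
      by (subst chi_wcomm) (rule dvd_add[OF dvd_add[OF chi_winv[OF that(1)] chi_winv[OF that(1)]] t3])
  qed
  show ?case using 1 2 by simp
qed

lemma commute_cr:
  assumes a: "a \<in> lists XX" and b: "b \<in> lists XX"
    and c: "meq_class p XX R a \<otimes>\<^bsub>mekler p XX R\<^esub> meq_class p XX R b
          = meq_class p XX R b \<otimes>\<^bsub>mekler p XX R\<^esub> meq_class p XX R a"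
    and ij: "i \<noteq> j" "\<not> R i j" "\<not> R j i"
  shows "int p dvd cr i j a b"
proof -
  have "meq_class p XX R (a @ b) = meq_class p XX R (b @ a)" using c a b by (simp add: mult_cl)
  hence "meq p XX R (b @ a) (a @ b)" using a b by (intro cl_eqD) auto
  hence "int p dvd (chi i j (b @ a) - chi i j (a @ b))" using meq_inv ij by blast
  moreover have "chi i j (b @ a) - chi i j (a @ b) = - 2 * cr i j a b"
    by (simp add: chi_append cr_def)
  ultimately have "int p dvd (2 * cr i j a b)" by simp
  moreover have "Factorial_Ring.prime (int p)" using pp by simp
  moreover have "\<not> int p dvd 2" using p2 by (auto dest: zdvd_imp_le)
  ultimately show ?thesis by (simp add: prime_dvd_mult_iff)
qed

end


definition cmg :: "('a, 'b) monoid_scheme \<Rightarrow> 'a \<Rightarrow> 'a \<Rightarrow> 'a" where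
  "cmg G g h = inv\<^bsub>G\<^esub> g \<otimes>\<^bsub>G\<^esub> inv\<^bsub>G\<^esub> h \<otimes>\<^bsub>G\<^esub> g \<otimes>\<^bsub>G\<^esub> h"

definition cent :: "('a, 'b) monoid_scheme \<Rightarrow> 'a set" where
  "cent G = {z \<in> carrier G. \<forall>x\<in>carrier G. z \<otimes>\<^bsub>G\<^esub> x = x \<otimes>\<^bsub>G\<^esub> z}"

context group
begin

lemma inv_cancel1[simp]: "x \<in> carrier G \<Longrightarrow> y \<in> carrier G \<Longrightarrow> inv x \<otimes> (x \<otimes> y) = y"
  by (simp add: m_assoc[symmetric])
lemma inv_cancel2[simp]: "x \<in> carrier G \<Longrightarrow> y \<in> carrier G \<Longrightarrow> x \<otimes> (inv x \<otimes> y) = y"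
  by (simp add: m_assoc[symmetric])

lemma cm_closed[simp]: "g \<in> carrier G \<Longrightarrow> h \<in> carrier G \<Longrightarrow> cmg G g h \<in> carrier G"
  by (simp add: cmg_def)

lemma cm_one_iff: assumes "g \<in> carrier G" "h \<in> carrier G"
  shows "cmg G g h = \<one> \<longleftrightarrow> g \<otimes> h = h \<otimes> g"
proof -
  have "cmg G g h = inv (h \<otimes> g) \<otimes> (g \<otimes> h)"
    using assms by (simp add: cmg_def inv_mult_group m_assoc)
  also have "\<dots> = \<one> \<longleftrightarrow> g \<otimes> h = h \<otimes> g"
    using assms by (simp add: inv_solve_left')
  finally show ?thesis .
qed

lemma cm_swap: "g \<in> carrier G \<Longrightarrow> h \<in> carrier G \<Longrightarrow> cmg G h g \<otimes> cmg G g h = \<one>"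
  by (simp add: cmg_def m_assoc)

lemma cm_mult1: assumes "a \<in> carrier G" "b \<in> carrier G" "c \<in> carrier G"
  shows "cmg G (a \<otimes> b) c = inv b \<otimes> cmg G a c \<otimes> (inv c \<otimes> b \<otimes> c)"
  using assms by (simp add: cmg_def m_assoc inv_mult_group)

lemma cm_mult2: assumes "a \<in> carrier G" "b \<in> carrier G" "c \<in> carrier G"
  shows "cmg G a (b \<otimes> c) = cmg G a c \<otimes> (inv c \<otimes> cmg G a b \<otimes> c)"
  using assms by (simp add: cmg_def m_assoc inv_mult_group)

lemma cent_sub: "cent G \<subseteq> carrier G" by (auto simp: cent_def)

lemma one_cent: "\<one> \<in> cent G" by (simp add: cent_def)

lemma inv_cent: assumes a: "a \<in> cent G" shows "inv a \<in> cent G"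
proof -
  have ac: "a \<in> carrier G" using a by (simp add: cent_def)
  have "inv a \<otimes> x = x \<otimes> inv a" if x: "x \<in> carrier G" for x
  proof -
    have e: "a \<otimes> x = x \<otimes> a" using a x by (simp add: cent_def)
    have "inv a \<otimes> x = inv a \<otimes> (x \<otimes> a) \<otimes> inv a" using x ac by (simp add: m_assoc)
    also have "\<dots> = inv a \<otimes> (a \<otimes> x) \<otimes> inv a" using e by simp
    also have "\<dots> = x \<otimes> inv a" using x ac by simp
    finally show ?thesis .
  qed
  thus ?thesis using ac by (simp add: cent_def)
qed

lemma mult_cent: assumes a: "a \<in> cent G" and b: "b \<in> cent G" shows "a \<otimes> b \<in> cent G"
proof -
  have ac: "a \<in> carrier G" "b \<in> carrier G" using a b by (auto simp: cent_def)
  have "a \<otimes> b \<otimes> x = x \<otimes> (a \<otimes> b)" if x: "x \<in> carrier G" for x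
  proof -
    have e1: "a \<otimes> x = x \<otimes> a" using a x by (simp add: cent_def)
    have e2: "b \<otimes> x = x \<otimes> b" using b x by (simp add: cent_def)
    have "a \<otimes> b \<otimes> x = a \<otimes> (b \<otimes> x)" using x ac by (simp add: m_assoc)
    also have "\<dots> = a \<otimes> (x \<otimes> b)" using e2 by simp
    also have "\<dots> = (a \<otimes> x) \<otimes> b" using x ac by (simp add: m_assoc)
    also have "\<dots> = (x \<otimes> a) \<otimes> b" using e1 by simp
    also have "\<dots> = x \<otimes> (a \<otimes> b)" using x ac by (simp add: m_assoc)
    finally show ?thesis .
  qed
  thus ?thesis using ac by (simp add: cent_def)
qed

lemma cent_subgroup: "subgroup (cent G) G"
  by (rule subgroupI[OF cent_sub]) (auto intro: one_cent inv_cent mult_cent)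

lemma centD: "z \<in> cent G \<Longrightarrow> x \<in> carrier G \<Longrightarrow> z \<otimes> x = x \<otimes> z"
  by (auto simp: cent_def)

lemma cm_mult1c: assumes "a \<in> carrier G" "b \<in> carrier G" "c \<in> carrier G" "cmg G a c \<in> cent G"
  shows "cmg G (a \<otimes> b) c = cmg G a c \<otimes> cmg G b c"
proof -
  have z: "cmg G a c \<in> carrier G" using assms by simp
  have "cmg G (a \<otimes> b) c = inv b \<otimes> cmg G a c \<otimes> (inv c \<otimes> b \<otimes> c)" by (rule cm_mult1[OF assms(1-3)])
  also have "inv b \<otimes> cmg G a c = cmg G a c \<otimes> inv b" using centD[OF assms(4)] assms by simp
  finally show ?thesis using assms z by (simp add: cmg_def m_assoc)
qed

lemma cm_mult2c: assumes "a \<in> carrier G" "b \<in> carrier G" "c \<in> carrier G" "cmg G a b \<in> cent G"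
  shows "cmg G a (b \<otimes> c) = cmg G a c \<otimes> cmg G a b"
proof -
  have z: "cmg G a b \<in> carrier G" using assms by simp
  have "cmg G a (b \<otimes> c) = cmg G a c \<otimes> (inv c \<otimes> cmg G a b \<otimes> c)" by (rule cm_mult2[OF assms(1-3)])
  also have "inv c \<otimes> cmg G a b = cmg G a b \<otimes> inv c" using centD[OF assms(4)] assms by simp
  finally show ?thesis using assms z by (simp add: m_assoc)
qed

end


context mk
begin

interpretation grp: group "mekler p XX R" by (rule group_G)

definition gen :: "'v \<Rightarrow> 'v list set" where "gen x = meq_class p XX R [x]"

lemma cl_carrier[simp]: "w \<in> lists XX \<Longrightarrow> meq_class p XX R w \<in> carrier (mekler p XX R)"
  by (simp add: carrier_G)

lemma gen_carrier[simp]: "x \<in> XX \<Longrightarrow> gen x \<in> carrier (mekler p XX R)"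
  by (simp add: gen_def)

lemma carrier_ex: "g \<in> carrier (mekler p XX R) \<Longrightarrow> \<exists>w\<in>lists XX. g = meq_class p XX R w"
  by (auto simp: carrier_G)

lemma cl_Cons: "x \<in> XX \<Longrightarrow> w \<in> lists XX \<Longrightarrow>
   meq_class p XX R (x # w) = gen x \<otimes>\<^bsub>mekler p XX R\<^esub> meq_class p XX R w"
  using mult_cl[of "[x]" w] by (simp add: gen_def)

lemma inv_cl: "w \<in> lists XX \<Longrightarrow> inv\<^bsub>mekler p XX R\<^esub> (meq_class p XX R w) = meq_class p XX R (winv p w)"
  apply (rule grp.inv_equality)
  using cl_eq[OF winv_cancel] winv_lists by (auto simp: mult_cl one_G)

lemma cm_cl: "a \<in> lists XX \<Longrightarrow> b \<in> lists XX \<Longrightarrow>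
  cmg (mekler p XX R) (meq_class p XX R a) (meq_class p XX R b) = meq_class p XX R (wcomm p a b)"
  by (simp add: cmg_def inv_cl mult_cl winv_lists wcomm_def)

lemma gen_pow: "x \<in> XX \<Longrightarrow> gen x [^]\<^bsub>mekler p XX R\<^esub> n = meq_class p XX R (replicate n x)"
proof (induct n)
  case 0 thus ?case by (simp add: one_G)
next
  case (Suc n)
  thus ?case using mult_cl[of "replicate n x" "[x]"] rep_lists[of x n]
    by (simp add: gen_def replicate_append_same)
qed

lemma gen_pow_p: "x \<in> XX \<Longrightarrow> gen x [^]\<^bsub>mekler p XX R\<^esub> p = \<one>\<^bsub>mekler p XX R\<^esub>"
  by (simp add: gen_pow one_G cl_eq meq.pow)

lemma cm_edge: "x \<in> XX \<Longrightarrow> y \<in> XX \<Longrightarrow> R x y \<Longrightarrow> cmg (mekler p XX R) (gen x) (gen y) = \<one>\<^bsub>mekler p XX R\<^esub>"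
  by (simp add: gen_def cm_cl one_G cl_eq meq.edge)

lemma cm_cls2: "x \<in> XX \<Longrightarrow> y \<in> XX \<Longrightarrow> z \<in> XX \<Longrightarrow>
   cmg (mekler p XX R) (cmg (mekler p XX R) (gen x) (gen y)) (gen z) = \<one>\<^bsub>mekler p XX R\<^esub>"
  using wcomm_lists[of "[x]" "[y]"]
  by (simp add: gen_def cm_cl one_G cl_eq meq.cls2)

lemma central_gens: assumes z: "z \<in> carrier (mekler p XX R)"
  and c: "\<And>x. x \<in> XX \<Longrightarrow> z \<otimes>\<^bsub>mekler p XX R\<^esub> gen x = gen x \<otimes>\<^bsub>mekler p XX R\<^esub> z"
  shows "z \<in> cent (mekler p XX R)"
proof -
  have "z \<otimes>\<^bsub>mekler p XX R\<^esub> meq_class p XX R w = meq_class p XX R w \<otimes>\<^bsub>mekler p XX R\<^esub> z"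
    if "w \<in> lists XX" for w
    using that
  proof (induction w rule: lists.induct)
    case Nil thus ?case using z by (simp add: one_G[symmetric])
  next
    case (Cons x w)
    hence x: "x \<in> XX" and w: "w \<in> lists XX" by simp_all
    have "z \<otimes>\<^bsub>mekler p XX R\<^esub> meq_class p XX R (x # w)
        = (z \<otimes>\<^bsub>mekler p XX R\<^esub> gen x) \<otimes>\<^bsub>mekler p XX R\<^esub> meq_class p XX R w"
      using x w z by (simp add: cl_Cons grp.m_assoc)
    also have "\<dots> = gen x \<otimes>\<^bsub>mekler p XX R\<^esub> (z \<otimes>\<^bsub>mekler p XX R\<^esub> meq_class p XX R w)"
      using x w z c[OF x] by (simp add: grp.m_assoc)
    also have "\<dots> = meq_class p XX R (x # w) \<otimes>\<^bsub>mekler p XX R\<^esub> z"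
      using x w z Cons.IH by (simp add: cl_Cons grp.m_assoc)
    finally show ?case .
  qed
  thus ?thesis using z by (auto simp: cent_def carrier_G)
qed

lemma cm_gen_cent: "x \<in> XX \<Longrightarrow> y \<in> XX \<Longrightarrow> cmg (mekler p XX R) (gen x) (gen y) \<in> cent (mekler p XX R)"
  by (rule central_gens) (auto simp: grp.cm_one_iff[symmetric] cm_cls2)

lemma cm_cent: assumes g: "g \<in> carrier (mekler p XX R)" and h: "h \<in> carrier (mekler p XX R)"
  shows "cmg (mekler p XX R) g h \<in> cent (mekler p XX R)"
proof -
  have A: "cmg (mekler p XX R) (gen x) (meq_class p XX R b) \<in> cent (mekler p XX R)"
    if x: "x \<in> XX" and b: "b \<in> lists XX" for x b
    using b
  proof (induction b rule: lists.induct)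
    case Nil thus ?case using x by (simp add: one_G[symmetric] cmg_def grp.one_cent)
  next
    case (Cons y b)
    hence y: "y \<in> XX" and b: "b \<in> lists XX" by auto
    show ?case using x y b Cons.IH cm_gen_cent[OF x y]
      by (simp add: cl_Cons grp.cm_mult2c grp.mult_cent)
  qed
  have B: "cmg (mekler p XX R) (meq_class p XX R a) h \<in> cent (mekler p XX R)"
    if a: "a \<in> lists XX" for a
    using a
  proof (induction a rule: lists.induct)
    case Nil thus ?case using h by (simp add: one_G[symmetric] cmg_def grp.one_cent)
  next
    case (Cons x a)
    hence x: "x \<in> XX" and a: "a \<in> lists XX" by auto
    obtain b where b: "b \<in> lists XX" "h = meq_class p XX R b" using carrier_ex[OF h] by blast
    show ?case using x a b Cons.IH A[OF x b(1)]
      by (simp add: cl_Cons grp.cm_mult1c grp.mult_cent)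
  qed
  show ?thesis using B carrier_ex[OF g] by blast
qed

lemma cm_mult1': "a \<in> carrier (mekler p XX R) \<Longrightarrow> b \<in> carrier (mekler p XX R) \<Longrightarrow> c \<in> carrier (mekler p XX R) \<Longrightarrow>
  cmg (mekler p XX R) (a \<otimes>\<^bsub>mekler p XX R\<^esub> b) c = cmg (mekler p XX R) a c \<otimes>\<^bsub>mekler p XX R\<^esub> cmg (mekler p XX R) b c"
  by (rule grp.cm_mult1c) (auto intro: cm_cent)

lemma cm_mult2': "a \<in> carrier (mekler p XX R) \<Longrightarrow> b \<in> carrier (mekler p XX R) \<Longrightarrow> c \<in> carrier (mekler p XX R) \<Longrightarrow>
  cmg (mekler p XX R) a (b \<otimes>\<^bsub>mekler p XX R\<^esub> c) = cmg (mekler p XX R) a c \<otimes>\<^bsub>mekler p XX R\<^esub> cmg (mekler p XX R) a b"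
  by (rule grp.cm_mult2c) (auto intro: cm_cent)

lemma cm_pow: assumes a: "a \<in> carrier (mekler p XX R)" and b: "b \<in> carrier (mekler p XX R)"
  shows "cmg (mekler p XX R) a (b [^]\<^bsub>mekler p XX R\<^esub> (n::nat)) = cmg (mekler p XX R) a b [^]\<^bsub>mekler p XX R\<^esub> n"
proof (induct n)
  case 0 thus ?case using a by (simp add: cmg_def)
next
  case (Suc n)
  have "cmg (mekler p XX R) a (b [^]\<^bsub>mekler p XX R\<^esub> Suc n)
      = cmg (mekler p XX R) a b \<otimes>\<^bsub>mekler p XX R\<^esub> cmg (mekler p XX R) a (b [^]\<^bsub>mekler p XX R\<^esub> n)"
    using a b by (simp add: cm_mult2')
  also have "\<dots> = cmg (mekler p XX R) a b [^]\<^bsub>mekler p XX R\<^esub> Suc n"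
    using Suc a b grp.nat_pow_Suc2[of "cmg (mekler p XX R) a b" n] by simp
  finally show ?case .
qed

lemma cm_gen_p: "x \<in> XX \<Longrightarrow> y \<in> XX \<Longrightarrow>
   cmg (mekler p XX R) (gen x) (gen y) [^]\<^bsub>mekler p XX R\<^esub> p = \<one>\<^bsub>mekler p XX R\<^esub>"
  using cm_pow[of "gen x" "gen y" p] by (simp add: gen_pow_p cmg_def)

end


definition cntn :: "'v \<Rightarrow> 'v list \<Rightarrow> nat" where
  "cntn i w = length (filter (\<lambda>x. x = i) w)"

lemma cnt_cntn: "cnt i w = int (cntn i w)" by (simp add: cnt_def cntn_def)
lemma cntn_Nil[simp]: "cntn i [] = 0" by (simp add: cntn_def)
lemma cntn_Cons[simp]: "cntn i (x # w) = (if x = i then 1 else 0) + cntn i w" by (simp add: cntn_def)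

lemma int_dvd_mod: "int p dvd (int m - int n) \<Longrightarrow> m mod p = n mod p"
  by (metis mod_eq_dvd_iff of_nat_eq_iff of_nat_mod)

locale mkf = mk +
  assumes fin: "finite XX"
begin

interpretation grp: group "mekler p XX R" by (rule group_G)

lemma cent_pow: "c \<in> cent (mekler p XX R) \<Longrightarrow> c [^]\<^bsub>mekler p XX R\<^esub> (n::nat) \<in> cent (mekler p XX R)"
  by (induct n) (auto simp: grp.one_cent grp.mult_cent)

definition Zg where "Zg = (mekler p XX R)\<lparr>carrier := cent (mekler p XX R)\<rparr>"

lemma Zg_cm: "comm_monoid Zg"
proof (rule comm_monoidI)
  fix x y assume "x \<in> carrier Zg" "y \<in> carrier Zg"
  thus "x \<otimes>\<^bsub>Zg\<^esub> y \<in> carrier Zg" by (simp add: Zg_def grp.mult_cent)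
next
  show "\<one>\<^bsub>Zg\<^esub> \<in> carrier Zg" by (simp add: Zg_def grp.one_cent)
next
  fix x y z assume "x \<in> carrier Zg" "y \<in> carrier Zg" "z \<in> carrier Zg"
  thus "x \<otimes>\<^bsub>Zg\<^esub> y \<otimes>\<^bsub>Zg\<^esub> z = x \<otimes>\<^bsub>Zg\<^esub> (y \<otimes>\<^bsub>Zg\<^esub> z)"
    using grp.cent_sub by (simp add: Zg_def grp.m_assoc subset_iff)
next
  fix x assume "x \<in> carrier Zg"
  thus "\<one>\<^bsub>Zg\<^esub> \<otimes>\<^bsub>Zg\<^esub> x = x" using grp.cent_sub by (auto simp: Zg_def)
next
  fix x y assume "x \<in> carrier Zg" "y \<in> carrier Zg"
  thus "x \<otimes>\<^bsub>Zg\<^esub> y = y \<otimes>\<^bsub>Zg\<^esub> x" using grp.cent_sub by (auto simp: Zg_def grp.centD)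
qed

definition cc where "cc x y = cmg (mekler p XX R) (gen x) (gen y)"

lemma cc_cent: "x \<in> XX \<Longrightarrow> y \<in> XX \<Longrightarrow> cc x y \<in> cent (mekler p XX R)"
  by (simp add: cc_def cm_gen_cent)

lemma cc_carrier: "x \<in> XX \<Longrightarrow> y \<in> XX \<Longrightarrow> cc x y \<in> carrier (mekler p XX R)"
  by (simp add: cc_def)

definition Kf where
  "Kf (n :: _ \<Rightarrow> nat) = finprod Zg (\<lambda>ij. cc (fst ij) (snd ij) [^]\<^bsub>mekler p XX R\<^esub> n ij) (XX \<times> XX)"

lemma Kf_Pi: "(\<lambda>ij. cc (fst ij) (snd ij) [^]\<^bsub>mekler p XX R\<^esub> (n ij :: nat)) \<in> XX \<times> XX \<rightarrow> carrier Zg"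
proof
  fix ij assume "ij \<in> XX \<times> XX"
  hence "cc (fst ij) (snd ij) \<in> cent (mekler p XX R)" by (auto intro: cc_cent)
  thus "cc (fst ij) (snd ij) [^]\<^bsub>mekler p XX R\<^esub> n ij \<in> carrier Zg"
    by (simp add: Zg_def cent_pow)
qed

lemma Kf_cong: "(\<And>ij. ij \<in> XX \<times> XX \<Longrightarrow> m ij = n ij) \<Longrightarrow> Kf m = Kf n"
  unfolding Kf_def by (rule comm_monoid.finprod_cong'[OF Zg_cm HOL.refl Kf_Pi]) simp

lemma Kf_add: "Kf (\<lambda>ij. m ij + n ij) = Kf m \<otimes>\<^bsub>mekler p XX R\<^esub> Kf n"
proof -
  have "Kf (\<lambda>ij. m ij + n ij) = finprod Zg (\<lambda>ij. cc (fst ij) (snd ij) [^]\<^bsub>mekler p XX R\<^esub> m ij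
      \<otimes>\<^bsub>Zg\<^esub> cc (fst ij) (snd ij) [^]\<^bsub>mekler p XX R\<^esub> n ij) (XX \<times> XX)"
    unfolding Kf_def
    by (rule comm_monoid.finprod_cong'[OF Zg_cm HOL.refl])
       (auto simp: Zg_def grp.nat_pow_mult cc_carrier intro!: grp.mult_cent cent_pow cc_cent)
  also have "\<dots> = Kf m \<otimes>\<^bsub>Zg\<^esub> Kf n"
    unfolding Kf_def by (rule comm_monoid.finprod_multf[OF Zg_cm Kf_Pi Kf_Pi])
  finally show ?thesis by (simp add: Zg_def)
qed

lemma Kf_zero: "Kf (\<lambda>ij. 0) = \<one>\<^bsub>mekler p XX R\<^esub>"
  unfolding Kf_def using comm_monoid.finprod_one_eqI[OF Zg_cm, of "XX \<times> XX"]
  by (simp add: Zg_def)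

lemma Kf_single: assumes "x \<in> XX" "y \<in> XX"
  shows "Kf (\<lambda>ij. if ij = (x, y) then 1 else 0) = cc x y"
proof -
  have "Kf (\<lambda>ij. if ij = (x, y) then 1 else 0) =
     finprod Zg (\<lambda>ij. if (x, y) = ij then cc (fst ij) (snd ij) else \<one>\<^bsub>Zg\<^esub>) (XX \<times> XX)"
    unfolding Kf_def
    by (rule comm_monoid.finprod_cong'[OF Zg_cm HOL.refl])
       (auto simp: Zg_def cc_carrier grp.one_cent cc_cent)
  also have "\<dots> = cc (fst (x, y)) (snd (x, y))"
    by (rule comm_monoid.finprod_singleton[OF Zg_cm]) (use assms fin in \<open>auto simp: Zg_def cc_cent\<close>)
  finally show ?thesis by simp
qed

lemma gen_bil: assumes x: "x \<in> XX" and b: "b \<in> lists XX"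
  shows "cmg (mekler p XX R) (gen x) (meq_class p XX R b) = Kf (\<lambda>ij. if fst ij = x then cntn (snd ij) b else 0)"
  using b
proof (induction b rule: lists.induct)
  case Nil
  have "Kf (\<lambda>ij. if fst ij = x then cntn (snd ij) [] else 0) = Kf (\<lambda>ij. 0)" by (rule Kf_cong) simp
  thus ?case using x by (simp add: Kf_zero one_G[symmetric] cmg_def)
next
  case (Cons y b)
  have "cmg (mekler p XX R) (gen x) (meq_class p XX R (y # b))
      = cmg (mekler p XX R) (gen x) (meq_class p XX R b) \<otimes>\<^bsub>mekler p XX R\<^esub> cc x y"
    using x Cons by (simp add: cl_Cons cm_mult2' cc_def)
  also have "\<dots> = Kf (\<lambda>ij. (if fst ij = x then cntn (snd ij) b else 0) + (if ij = (x, y) then 1 else 0))"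
    using Cons x by (simp add: Kf_add Kf_single)
  also have "\<dots> = Kf (\<lambda>ij. if fst ij = x then cntn (snd ij) (y # b) else 0)"
    by (rule Kf_cong) auto
  finally show ?case .
qed

lemma bil: assumes a: "a \<in> lists XX" and b: "b \<in> lists XX"
  shows "cmg (mekler p XX R) (meq_class p XX R a) (meq_class p XX R b) = Kf (\<lambda>ij. cntn (fst ij) a * cntn (snd ij) b)"
  using a
proof (induction a rule: lists.induct)
  case Nil
  have "Kf (\<lambda>ij. cntn (fst ij) [] * cntn (snd ij) b) = Kf (\<lambda>ij. 0)" by (rule Kf_cong) simp
  thus ?case using b by (simp add: Kf_zero one_G[symmetric] cmg_def)
next
  case (Cons x a)
  have "cmg (mekler p XX R) (meq_class p XX R (x # a)) (meq_class p XX R b)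
      = cmg (mekler p XX R) (gen x) (meq_class p XX R b) \<otimes>\<^bsub>mekler p XX R\<^esub>
        cmg (mekler p XX R) (meq_class p XX R a) (meq_class p XX R b)"
    using b Cons by (simp add: cl_Cons cm_mult1')
  also have "\<dots> = Kf (\<lambda>ij. (if fst ij = x then cntn (snd ij) b else 0) + cntn (fst ij) a * cntn (snd ij) b)"
    using Cons b by (simp add: Kf_add gen_bil)
  also have "\<dots> = Kf (\<lambda>ij. cntn (fst ij) (x # a) * cntn (snd ij) b)"
    by (rule Kf_cong) (auto simp: algebra_simps)
  finally show ?case .
qed

end


context mkf
begin

interpretation grp: group "mekler p XX R" by (rule group_G)

lemma pow_modp: assumes "x \<in> XX" "y \<in> XX"
  shows "cc x y [^]\<^bsub>mekler p XX R\<^esub> (m::nat) = cc x y [^]\<^bsub>mekler p XX R\<^esub> (m mod p)"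
proof -
  have c: "cc x y \<in> carrier (mekler p XX R)" using assms by (rule cc_carrier)
  have "cc x y [^]\<^bsub>mekler p XX R\<^esub> m = cc x y [^]\<^bsub>mekler p XX R\<^esub> (p * (m div p) + m mod p)"
    by simp
  also have "\<dots> = (cc x y [^]\<^bsub>mekler p XX R\<^esub> p) [^]\<^bsub>mekler p XX R\<^esub> (m div p)
       \<otimes>\<^bsub>mekler p XX R\<^esub> cc x y [^]\<^bsub>mekler p XX R\<^esub> (m mod p)"
    using c by (simp add: grp.nat_pow_mult grp.nat_pow_pow)
  also have "\<dots> = cc x y [^]\<^bsub>mekler p XX R\<^esub> (m mod p)"
    using c assms by (simp add: cc_def cm_gen_p)
  finally show ?thesis .
qed

lemma cc_self: "x \<in> XX \<Longrightarrow> cc x x = \<one>\<^bsub>mekler p XX R\<^esub>"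
  by (simp add: cc_def cmg_def grp.m_assoc)

lemma cc_swap: "x \<in> XX \<Longrightarrow> y \<in> XX \<Longrightarrow> cc x y \<otimes>\<^bsub>mekler p XX R\<^esub> cc y x = \<one>\<^bsub>mekler p XX R\<^esub>"
  unfolding cc_def by (rule grp.cm_swap) auto

lemma factor_one: assumes ij: "i \<in> XX" "j \<in> XX"
  and h: "i = j \<or> R i j \<or> R j i \<or> m mod p = n mod p"
  shows "cc i j [^]\<^bsub>mekler p XX R\<^esub> (m::nat) \<otimes>\<^bsub>mekler p XX R\<^esub> cc j i [^]\<^bsub>mekler p XX R\<^esub> (n::nat) = \<one>\<^bsub>mekler p XX R\<^esub>"
proof -
  have c1: "cc i j \<in> carrier (mekler p XX R)" and c2: "cc j i \<in> carrier (mekler p XX R)"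
    using ij by (auto intro: cc_carrier)
  have s1: "cc i j \<otimes>\<^bsub>mekler p XX R\<^esub> cc j i = \<one>\<^bsub>mekler p XX R\<^esub>" using cc_swap ij by blast
  have s2: "cc j i \<otimes>\<^bsub>mekler p XX R\<^esub> cc i j = \<one>\<^bsub>mekler p XX R\<^esub>" using cc_swap ij by blast
  consider "i = j" | "R i j" | "R j i" | "m mod p = n mod p" using h by blast
  thus ?thesis
  proof cases
    case 1 thus ?thesis using ij by (simp add: cc_self)
  next
    case 2
    hence e1: "cc i j = \<one>\<^bsub>mekler p XX R\<^esub>" using ij by (simp add: cc_def cm_edge)
    hence "cc j i = \<one>\<^bsub>mekler p XX R\<^esub>" using s1 c2 by simp
    thus ?thesis using e1 by simp
  next
    case 3
    hence e1: "cc j i = \<one>\<^bsub>mekler p XX R\<^esub>" using ij by (simp add: cc_def cm_edge)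
    hence "cc i j = \<one>\<^bsub>mekler p XX R\<^esub>" using s2 c1 by simp
    thus ?thesis using e1 by simp
  next
    case 4
    have "cc j i [^]\<^bsub>mekler p XX R\<^esub> n = cc j i [^]\<^bsub>mekler p XX R\<^esub> m"
      using pow_modp[of j i n] pow_modp[of j i m] ij 4 by simp
    moreover have "cc i j \<otimes>\<^bsub>mekler p XX R\<^esub> cc j i = cc j i \<otimes>\<^bsub>mekler p XX R\<^esub> cc i j"
      using s1 s2 by simp
    ultimately have "cc i j [^]\<^bsub>mekler p XX R\<^esub> m \<otimes>\<^bsub>mekler p XX R\<^esub> cc j i [^]\<^bsub>mekler p XX R\<^esub> n
       = (cc i j \<otimes>\<^bsub>mekler p XX R\<^esub> cc j i) [^]\<^bsub>mekler p XX R\<^esub> m"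
      using grp.pow_mult_distrib[of "cc i j" "cc j i" m] c1 c2 by simp
    thus ?thesis using s1 by simp
  qed
qed

lemma Kf_modcong: "(\<And>ij. ij \<in> XX \<times> XX \<Longrightarrow> m ij mod p = n ij mod p) \<Longrightarrow> Kf m = Kf n"
  unfolding Kf_def
  by (rule comm_monoid.finprod_cong'[OF Zg_cm HOL.refl Kf_Pi])
     (metis SigmaE fst_conv snd_conv pow_modp)

lemma cc_pow_Zg: "x \<in> XX \<Longrightarrow> y \<in> XX \<Longrightarrow> cc x y [^]\<^bsub>mekler p XX R\<^esub> (k::nat) \<in> carrier Zg"
  by (simp add: Zg_def cent_pow cc_cent)

lemma swap_eq: "prod.swap x = (snd x, fst x)" by (cases x) simp

lemma Kf_swap: "Kf m = finprod Zg (\<lambda>ij. cc (snd ij) (fst ij) [^]\<^bsub>mekler p XX R\<^esub> (m (snd ij, fst ij) :: nat)) (XX \<times> XX)"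
proof -
  have "Kf m = finprod Zg (\<lambda>ij. cc (fst ij) (snd ij) [^]\<^bsub>mekler p XX R\<^esub> m ij) (prod.swap ` (XX \<times> XX))"
    by (simp add: Kf_def product_swap)
  also have "\<dots> = finprod Zg (\<lambda>ij. cc (snd ij) (fst ij) [^]\<^bsub>mekler p XX R\<^esub> (m (snd ij, fst ij))) (XX \<times> XX)"
    by (subst comm_monoid.finprod_reindex[OF Zg_cm]) (auto simp: product_swap swap_eq cc_pow_Zg)
  finally show ?thesis .
qed

lemma Kf_trivial: assumes H: "\<And>i j. i \<in> XX \<Longrightarrow> j \<in> XX \<Longrightarrow> i \<noteq> j \<Longrightarrow> \<not> R i j \<Longrightarrow> \<not> R j i \<Longrightarrow>
     int p dvd (cnt i a * cnt j b - cnt j a * cnt i b)"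
  shows "Kf (\<lambda>ij. cntn (fst ij) a * cntn (snd ij) b) = \<one>\<^bsub>mekler p XX R\<^esub>"
proof -
  define e where "e = (\<lambda>ij. cntn (fst ij) a * cntn (snd ij) b)"
  define h where "h = (p + 1) div 2"
  have "odd p" using pp p2 by (simp add: prime_odd_nat)
  hence h2: "2 * h = p + 1" unfolding h_def by simp
  have "Kf e = Kf (\<lambda>ij. h * e ij + h * e ij)"
  proof (rule Kf_modcong)
    fix ij
    have "h * e ij + h * e ij = (2 * h) * e ij" by simp
    also have "\<dots> = p * e ij + e ij" using h2 by simp
    finally have "h * e ij + h * e ij = p * e ij + e ij" .
    thus "e ij mod p = (h * e ij + h * e ij) mod p" by simp
  qed
  also have "\<dots> = Kf (\<lambda>ij. h * e ij) \<otimes>\<^bsub>mekler p XX R\<^esub> Kf (\<lambda>ij. h * e ij)" by (rule Kf_add)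
  also have "\<dots> = Kf (\<lambda>ij. h * e ij) \<otimes>\<^bsub>Zg\<^esub>
      finprod Zg (\<lambda>ij. cc (snd ij) (fst ij) [^]\<^bsub>mekler p XX R\<^esub> (h * e (snd ij, fst ij))) (XX \<times> XX)"
    by (subst (2) Kf_swap) (simp add: Zg_def)
  also have "\<dots> = finprod Zg (\<lambda>ij. cc (fst ij) (snd ij) [^]\<^bsub>mekler p XX R\<^esub> (h * e ij) \<otimes>\<^bsub>Zg\<^esub>
       cc (snd ij) (fst ij) [^]\<^bsub>mekler p XX R\<^esub> (h * e (snd ij, fst ij))) (XX \<times> XX)"
    unfolding Kf_def
    by (rule comm_monoid.finprod_multf[symmetric, OF Zg_cm Kf_Pi])
       (use Kf_Pi[of "\<lambda>ij. h * e (snd ij, fst ij)"] in \<open>auto simp: Zg_def intro!: cent_pow cc_cent\<close>)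
  also have "\<dots> = \<one>\<^bsub>Zg\<^esub>"
  proof (rule comm_monoid.finprod_one_eqI[OF Zg_cm])
    fix ij assume ij: "ij \<in> XX \<times> XX"
    obtain i j where ijd: "ij = (i, j)" "i \<in> XX" "j \<in> XX" using ij by auto
    have "i = j \<or> R i j \<or> R j i \<or> (h * e (i, j)) mod p = (h * e (j, i)) mod p"
    proof (cases "i = j \<or> R i j \<or> R j i")
      case False
      hence "int p dvd (cnt i a * cnt j b - cnt j a * cnt i b)" using H ijd by blast
      hence "e (i, j) mod p = e (j, i) mod p"
        unfolding e_def by (intro int_dvd_mod) (simp add: cnt_cntn)
      thus ?thesis by (metis mod_mult_right_eq)
    qed auto
    thus "cc (fst ij) (snd ij) [^]\<^bsub>mekler p XX R\<^esub> (h * e ij) \<otimes>\<^bsub>Zg\<^esub>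
       cc (snd ij) (fst ij) [^]\<^bsub>mekler p XX R\<^esub> (h * e (snd ij, fst ij)) = \<one>\<^bsub>Zg\<^esub>"
      using factor_one[of i j] ijd by (simp add: Zg_def)
  qed
  finally show ?thesis by (simp add: Zg_def e_def)
qed

end


lemma comb:
  fixes d e f :: "'v \<Rightarrow> int" and q :: int
  assumes qp: "Factorial_Ring.prime q"
  and C4: "\<And>s1 s2 i j. s1 \<in> XX \<Longrightarrow> s2 \<in> XX \<Longrightarrow> i \<in> XX \<Longrightarrow> j \<in> XX \<Longrightarrow> s1 \<noteq> s2 \<Longrightarrow> i \<noteq> j
      \<Longrightarrow> R s1 i \<Longrightarrow> R s2 i \<Longrightarrow> R s1 j \<Longrightarrow> R s2 j \<Longrightarrow> False"
  and Rsym: "\<And>x y. R x y \<Longrightarrow> R y x"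
  and hd: "\<And>i j. i \<in> XX \<Longrightarrow> j \<in> XX \<Longrightarrow> i \<noteq> j \<Longrightarrow> \<not> R i j \<Longrightarrow> q dvd (d i * e j - d j * e i)"
  and hf: "\<And>i j. i \<in> XX \<Longrightarrow> j \<in> XX \<Longrightarrow> i \<noteq> j \<Longrightarrow> \<not> R i j \<Longrightarrow> q dvd (d i * f j - d j * f i)"
  and s: "s1 \<in> XX" "s2 \<in> XX" "s1 \<noteq> s2" "\<not> q dvd d s1" "\<not> q dvd d s2"
  and ij: "i \<in> XX" "j \<in> XX" "i \<noteq> j" "\<not> R i j"
  shows "q dvd (e i * f j - e j * f i)"
proof -
  have key: "R s x" if x: "x \<in> XX" "q dvd d x" and g: "\<And>i j. i \<in> XX \<Longrightarrow> j \<in> XX \<Longrightarrow> i \<noteq> j \<Longrightarrow> \<not> R i j \<Longrightarrow> q dvd (d i * g j - d j * g i)"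
     and nx: "\<not> q dvd g x" and ss: "s \<in> XX" "\<not> q dvd d s" for x g s
  proof (rule ccontr)
    assume nr: "\<not> R s x"
    have sx: "s \<noteq> x" using x ss by auto
    have "q dvd (d s * g x - d x * g s)" using g[OF ss(1) x(1) sx nr] .
    moreover have "q dvd (d x * g s)" using x by simp
    ultimately have "q dvd (d s * g x)" using dvd_add by fastforce
    thus False using qp ss nx by (simp add: prime_dvd_mult_iff)
  qed
  have jirel: "\<not> R j i" using ij Rsym by blast
  consider "\<not> q dvd d i" "\<not> q dvd d j" | "\<not> q dvd d i" "q dvd d j" | "q dvd d i" "\<not> q dvd d j"
    | "q dvd d i" "q dvd d j" by blast
  thus ?thesis
  proof cases
    case 1
    have eq: "d i * (e i * f j - e j * f i) = e i * (d i * f j - d j * f i) - f i * (d i * e j - d j * e i)"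
      by (simp add: algebra_simps)
    have "q dvd d i * (e i * f j - e j * f i)" unfolding eq using hd[OF ij] hf[OF ij] by simp
    thus ?thesis using qp 1 by (simp add: prime_dvd_mult_iff)
  next
    case 2
    have "q dvd (d i * e j)" using hd[OF ij] 2 using dvd_add[of q "d i * e j - d j * e i" "d j * e i"] by simp
    hence ej: "q dvd e j" using qp 2 by (simp add: prime_dvd_mult_iff)
    have "q dvd (d i * f j)" using hf[OF ij] 2 using dvd_add[of q "d i * f j - d j * f i" "d j * f i"] by simp
    hence fj: "q dvd f j" using qp 2 by (simp add: prime_dvd_mult_iff)
    show ?thesis using ej fj by simp
  next
    case 3
    have ij': "j \<in> XX" "i \<in> XX" "j \<noteq> i" "\<not> R j i" using ij jirel by auto
    have "q dvd (d j * e i)" using hd[OF ij'] 3 using dvd_add[of q "d j * e i - d i * e j" "d i * e j"] by simp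
    hence ei: "q dvd e i" using qp 3 by (simp add: prime_dvd_mult_iff)
    have "q dvd (d j * f i)" using hf[OF ij'] 3 using dvd_add[of q "d j * f i - d i * f j" "d i * f j"] by simp
    hence fi: "q dvd f i" using qp 3 by (simp add: prime_dvd_mult_iff)
    show ?thesis using ei fi by simp
  next
    case 4
    have A: "q dvd e i * f j"
    proof (rule ccontr)
      assume "\<not> q dvd e i * f j"
      hence "\<not> q dvd e i" "\<not> q dvd f j" by auto
      hence "R s1 i" "R s2 i" "R s1 j" "R s2 j"
        using key[of i e s1] key[of i e s2] key[of j f s1] key[of j f s2] 4 ij s hd hf by auto
      thus False using C4[of s1 s2 i j] s ij by blast
    qed
    have B: "q dvd e j * f i"
    proof (rule ccontr)
      assume "\<not> q dvd e j * f i"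
      hence "\<not> q dvd e j" "\<not> q dvd f i" by auto
      hence "R s1 i" "R s2 i" "R s1 j" "R s2 j"
        using key[of i f s1] key[of i f s2] key[of j e s1] key[of j e s2] 4 ij s hd hf by auto
      thus False using C4[of s1 s2 i j] s ij by blast
    qed
    show ?thesis using A B by (simp add: dvd_diff)
  qed
qed

context mkf
begin

interpretation grp: group "mekler p XX R" by (rule group_G)

lemma commute_words:
  assumes a: "a \<in> lists XX" and b: "b \<in> lists XX"
    and H: "\<And>i j. i \<in> XX \<Longrightarrow> j \<in> XX \<Longrightarrow> i \<noteq> j \<Longrightarrow> \<not> R i j \<Longrightarrow> \<not> R j i \<Longrightarrow>
     int p dvd (cnt i a * cnt j b - cnt j a * cnt i b)"
  shows "meq_class p XX R a \<otimes>\<^bsub>mekler p XX R\<^esub> meq_class p XX R b = meq_class p XX R b \<otimes>\<^bsub>mekler p XX R\<^esub> meq_class p XX R a"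
proof -
  have "cmg (mekler p XX R) (meq_class p XX R a) (meq_class p XX R b) = \<one>\<^bsub>mekler p XX R\<^esub>"
    using bil[OF a b] Kf_trivial[OF H] by simp
  thus ?thesis using a b by (simp add: grp.cm_one_iff)
qed

end


lemma Ext_in[simp]: "Ext v w b \<in> cfi_V V E \<longleftrightarrow> v \<in> V \<and> E v w"
  by (auto simp: cfi_V_def)
lemma Inner_in[simp]: "Inner v S \<in> cfi_V V E \<longleftrightarrow> v \<in> V \<and> S \<subseteq> {w. E v w} \<and> even (card S)"
  by (auto simp: cfi_V_def)

lemma R_II[simp]: "\<not> cfi_E V E T (Inner v S) (Inner v' S')"
  by (auto simp: cfi_E_def)
lemma R_IE[simp]: "cfi_E V E T (Inner v S) (Ext v' w b) \<longleftrightarrow>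
   Inner v S \<in> cfi_V V E \<and> Ext v' w b \<in> cfi_V V E \<and> v' = v \<and> (b \<longleftrightarrow> w \<in> S)"
  by (auto simp: cfi_E_def simp del: Ext_in Inner_in)
lemma R_EI[simp]: "cfi_E V E T (Ext v' w b) (Inner v S) \<longleftrightarrow>
   Inner v S \<in> cfi_V V E \<and> Ext v' w b \<in> cfi_V V E \<and> v' = v \<and> (b \<longleftrightarrow> w \<in> S)"
  by (auto simp: cfi_E_def simp del: Ext_in Inner_in)
lemma R_EE[simp]: "cfi_E V E T (Ext v w b) (Ext v' w' b') \<longleftrightarrow>
   Ext v w b \<in> cfi_V V E \<and> Ext v' w' b' \<in> cfi_V V E \<and> v' = w \<and> w' = v \<and> (b' \<longleftrightarrow> (b \<noteq> ({v, w} \<in> T)))"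
  by (auto simp: cfi_E_def simp del: Ext_in Inner_in)

lemma cfi_sym: "cfi_E V E T x y \<Longrightarrow> cfi_E V E T y x"
  by (cases x; cases y) (auto simp: insert_commute)

lemma cfi_finite: assumes "simple_graph V E" shows "finite (cfi_V V E)"
proof -
  have fV: "finite V" and EV: "\<And>x y. E x y \<Longrightarrow> x \<in> V \<and> y \<in> V"
    using assms by (auto simp: simple_graph_def)
  have "cfi_V V E \<subseteq> (\<lambda>(v, w, b). Ext v w b) ` (V \<times> V \<times> UNIV) \<union> (\<lambda>(v, S). Inner v S) ` (V \<times> Pow V)"
    using EV by (auto simp: cfi_V_def image_iff) (use EV in blast)
  moreover have "finite ((\<lambda>(v, w, b). Ext v w b) ` (V \<times> V \<times> (UNIV :: bool set)) \<union> (\<lambda>(v, S). Inner v S) ` (V \<times> Pow V))"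
    using fV by simp
  ultimately show ?thesis by (rule finite_subset)
qed

lemma nbhd_1: assumes "regular3 V E" "v \<in> V" "E v w"
  shows "\<exists>w' w''. {y. E v y} = {w, w', w''} \<and> w \<noteq> w' \<and> w \<noteq> w'' \<and> w' \<noteq> w''"
proof -
  have c: "card {y. E v y} = 3" using assms by (simp add: regular3_def)
  then obtain x y z where N: "{y. E v y} = {x, y, z}" "x \<noteq> y" "y \<noteq> z" "x \<noteq> z"
    by (auto simp: card_3_iff)
  have "w \<in> {x, y, z}" using N assms by blast
  thus ?thesis using N by (auto simp: insert_commute)
qed

lemma nbhd_2: assumes "regular3 V E" "v \<in> V" "E v w" "E v w'" "w \<noteq> w'"
  shows "\<exists>w''. {y. E v y} = {w, w', w''} \<and> w \<noteq> w'' \<and> w' \<noteq> w''"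
proof -
  have c: "card {y. E v y} = 3" using assms by (simp add: regular3_def)
  then obtain x y z where N: "{y. E v y} = {x, y, z}" "x \<noteq> y" "y \<noteq> z" "x \<noteq> z"
    by (auto simp: card_3_iff)
  have "w \<in> {x, y, z}" "w' \<in> {x, y, z}" using N assms by blast+
  thus ?thesis using N assms(5) by (auto simp: insert_commute)
qed

lemma two_nbrs:
  assumes sg: "simple_graph V E" and r3: "regular3 V E" and a: "a \<in> cfi_V V E"
  shows "\<exists>n1 n2. n1 \<in> cfi_V V E \<and> n2 \<in> cfi_V V E \<and> n1 \<noteq> n2 \<and> cfi_E V E T a n1 \<and> cfi_E V E T a n2
     \<and> \<not> cfi_E V E T n1 n2"
proof (cases a)
  case (Ext v w b)
  hence vw: "v \<in> V" "E v w" using a by auto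
  obtain w' w'' where N: "{y. E v y} = {w, w', w''}" "w \<noteq> w'" "w \<noteq> w''" "w' \<noteq> w''"
    using nbhd_1[OF r3 vw] by blast
  define S1 where "S1 = (if b then {w, w'} else {})"
  define S2 where "S2 = (if b then {w, w''} else {w', w''})"
  have S1: "S1 \<subseteq> {y. E v y}" "even (card S1)" "b \<longleftrightarrow> w \<in> S1" using N by (auto simp: S1_def)
  have S2: "S2 \<subseteq> {y. E v y}" "even (card S2)" "b \<longleftrightarrow> w \<in> S2" using N by (auto simp: S2_def)
  have ne: "S1 \<noteq> S2" using N by (auto simp: S1_def S2_def doubleton_eq_iff)
  show ?thesis
    apply (rule exI[of _ "Inner v S1"], rule exI[of _ "Inner v S2"])
    using S1 S2 ne vw Ext by simp
next
  case (Inner v S)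
  hence v: "v \<in> V" using a by auto
  have c: "card {y. E v y} = 3" using r3 v by (simp add: regular3_def)
  then obtain x y z where N: "{y. E v y} = {x, y, z}" "x \<noteq> y" "y \<noteq> z" "x \<noteq> z"
    by (auto simp: card_3_iff)
  have irr: "\<And>x. \<not> E x x" using sg by (simp add: simple_graph_def)
  have Ex: "E v x" "E v y" using N by blast+
  hence "v \<noteq> x" "v \<noteq> y" using irr by auto
  show ?thesis
    apply (rule exI[of _ "Ext v x (x \<in> S)"], rule exI[of _ "Ext v y (y \<in> S)"])
    using Ex v Inner a N \<open>v \<noteq> x\<close> by auto
qed

lemma parity_lemma:
  assumes "S \<subseteq> {wi, wj, w3}" "S2 \<subseteq> {wi, wj, w3}" "wi \<in> S \<longleftrightarrow> wi \<in> S2" "wj \<in> S \<longleftrightarrow> wj \<in> S2"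
    "even (card S)" "even (card S2)" "w3 \<noteq> wi" "w3 \<noteq> wj"
  shows "S = S2"
proof (rule ccontr)
  assume ne: "S \<noteq> S2"
  have "w3 \<in> S \<longleftrightarrow> w3 \<notin> S2" using assms ne by blast
  then consider "w3 \<in> S" "w3 \<notin> S2" | "w3 \<notin> S" "w3 \<in> S2" by blast
  thus False
  proof cases
    case 1
    have "S = insert w3 S2" using assms 1 by blast
    hence "card S = Suc (card S2)" using 1 finite_subset[OF assms(2)] by simp
    thus False using assms by simp
  next
    case 2
    have "S2 = insert w3 S" using assms 2 by blast
    hence "card S2 = Suc (card S)" using 2 finite_subset[OF assms(1)] by simp
    thus False using assms by simp
  qed
qed

lemma c4_inner:
  assumes sg: "simple_graph V E" and r3: "regular3 V E"
    and s1: "s1 = Inner v S" and ne: "s1 \<noteq> s2" "i \<noteq> j"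
    and e: "cfi_E V E T s1 i" "cfi_E V E T s1 j" "cfi_E V E T s2 i" "cfi_E V E T s2 j"
  shows False
proof -
  obtain wi bi where i: "i = Ext v wi bi" "bi \<longleftrightarrow> wi \<in> S" "E v wi" "v \<in> V" "S \<subseteq> {w. E v w}" "even (card S)"
    using e(1) s1 by (cases i) auto
  obtain wj bj where j: "j = Ext v wj bj" "bj \<longleftrightarrow> wj \<in> S" "E v wj"
    using e(2) s1 by (cases j) auto
  have wij: "wi \<noteq> wj" using i j ne by auto
  obtain S2 where s2: "s2 = Inner v S2" "wi \<in> S2 \<longleftrightarrow> bi" "wj \<in> S2 \<longleftrightarrow> bj" "S2 \<subseteq> {w. E v w}" "even (card S2)"
  proof (cases s2)
    case (Ext x y c)
    hence "x = wi" "x = wj" using e(3,4) i j by auto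
    thus ?thesis using wij by simp
  next
    case (Inner x S2)
    thus ?thesis using e(3,4) i j that by auto
  qed
  obtain w3 where N: "{y. E v y} = {wi, wj, w3}" "wi \<noteq> w3" "wj \<noteq> w3"
    using nbhd_2[OF r3 i(4) i(3) j(3) wij] by blast
  have "S = S2"
    by (rule parity_lemma[of S wi wj w3 S2]) (use i j s2 N in auto)
  thus False using s1 s2 ne by simp
qed

lemma c4_free:
  assumes sg: "simple_graph V E" and r3: "regular3 V E"
    and ne: "s1 \<noteq> s2" "i \<noteq> j"
    and e: "cfi_E V E T s1 i" "cfi_E V E T s2 i" "cfi_E V E T s1 j" "cfi_E V E T s2 j"
  shows False
proof -
  have sym: "\<And>x y. cfi_E V E T x y \<Longrightarrow> cfi_E V E T y x" by (rule cfi_sym)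
  show False
  proof (cases "\<exists>v S. s1 = Inner v S")
    case True thus ?thesis using c4_inner[OF sg r3 _ ne] e by blast
  next
    case F1: False
    show ?thesis
    proof (cases "\<exists>v S. s2 = Inner v S")
      case True thus ?thesis using c4_inner[OF sg r3 _ ne(1)[symmetric] ne(2)] e by blast
    next
      case F2: False
      show ?thesis
      proof (cases "\<exists>v S. i = Inner v S")
        case True thus ?thesis using c4_inner[OF sg r3 _ ne(2) ne(1)] e sym by blast
      next
        case F3: False
        show ?thesis
        proof (cases "\<exists>v S. j = Inner v S")
          case True thus ?thesis using c4_inner[OF sg r3 _ ne(2)[symmetric] ne(1)] e sym by blast
        next
          case F4: False
          obtain a b c where s1e: "s1 = Ext a b c" using F1 by (cases s1) auto
          obtain a1 b1 c1 where ie: "i = Ext a1 b1 c1" using F3 by (cases i) auto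
          obtain a2 b2 c2 where je: "j = Ext a2 b2 c2" using F4 by (cases j) auto
          show False using e(1,3) s1e ie je ne(2) by auto
        qed
      qed
    qed
  qed
qed


context mk
begin

interpretation grp: group "mekler p XX R" by (rule group_G)

definition rep where "rep g = (SOME w. w \<in> lists XX \<and> g = meq_class p XX R w)"

lemma rep_spec: "g \<in> carrier (mekler p XX R) \<Longrightarrow> rep g \<in> lists XX \<and> g = meq_class p XX R (rep g)"
  unfolding rep_def by (rule someI_ex) (use carrier_ex in blast)

lemma cnt_rep: assumes w: "w \<in> lists XX" shows "cnt i (rep (meq_class p XX R w)) mod int p = cnt i w mod int p"
proof -
  have r: "rep (meq_class p XX R w) \<in> lists XX" "meq_class p XX R w = meq_class p XX R (rep (meq_class p XX R w))"
    using rep_spec[of "meq_class p XX R w"] w by auto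
  have "meq p XX R w (rep (meq_class p XX R w))" by (rule cl_eqD[OF r(1) r(2)[symmetric]])
  hence "int p dvd (cnt i w - cnt i (rep (meq_class p XX R w)))" using meq_inv by blast
  thus ?thesis by (simp add: mod_eq_dvd_iff dvd_diff_commute)
qed

definition psi where "psi a g = cnt a (rep g) mod int p"

lemma psi_cl: "w \<in> lists XX \<Longrightarrow> psi a (meq_class p XX R w) = cnt a w mod int p"
  by (simp add: psi_def cnt_rep)

lemma psi_mult: assumes g: "g \<in> carrier (mekler p XX R)" and h: "h \<in> carrier (mekler p XX R)"
  shows "psi a (g \<otimes>\<^bsub>mekler p XX R\<^esub> h) = (psi a g + psi a h) mod int p"
proof -
  have "g \<otimes>\<^bsub>mekler p XX R\<^esub> h = meq_class p XX R (rep g @ rep h)"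
    using rep_spec[OF g] rep_spec[OF h] mult_cl by metis
  hence "psi a (g \<otimes>\<^bsub>mekler p XX R\<^esub> h) = (cnt a (rep g) + cnt a (rep h)) mod int p"
    using rep_spec[OF g] rep_spec[OF h] by (simp add: psi_cl)
  thus ?thesis by (simp add: psi_def mod_add_eq)
qed

lemma psi_one: "psi a \<one>\<^bsub>mekler p XX R\<^esub> = 0"
  by (simp add: one_G psi_cl)

lemma psi_inv: assumes g: "g \<in> carrier (mekler p XX R)"
  shows "psi a (inv\<^bsub>mekler p XX R\<^esub> g) = (- psi a g) mod int p"
proof -
  have "inv\<^bsub>mekler p XX R\<^esub> g = meq_class p XX R (winv p (rep g))"
    using rep_spec[OF g] inv_cl by metis
  hence "psi a (inv\<^bsub>mekler p XX R\<^esub> g) = ((int p - 1) * cnt a (rep g)) mod int p"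
    using rep_spec[OF g] winv_lists by (simp add: psi_cl cnt_winv)
  also have "\<dots> = (int p * cnt a (rep g) + (- cnt a (rep g))) mod int p" by (simp add: algebra_simps)
  also have "\<dots> = (- cnt a (rep g)) mod int p" by (rule mod_mult_self4)
  also have "\<dots> = (- psi a g) mod int p" by (simp add: psi_def mod_minus_eq)
  finally show ?thesis .
qed

lemma psi_gen_pow: "x \<in> XX \<Longrightarrow> psi a (gen x [^]\<^bsub>mekler p XX R\<^esub> (n::nat)) = (if x = a then int n else 0) mod int p"
  by (simp add: gen_pow psi_cl rep_lists)

lemma psi_range: "psi a g mod int p = psi a g" by (simp add: psi_def)

lemma psi_derived: assumes c: "c \<in> derived (mekler p XX R) (carrier (mekler p XX R))"
  shows "psi a c = 0"
  using c unfolding derived_def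
proof (induct c rule: generate.induct)
  case one thus ?case by (simp add: psi_one)
next
  case (incl h)
  then obtain h1 h2 where h: "h1 \<in> carrier (mekler p XX R)" "h2 \<in> carrier (mekler p XX R)"
    "h = h1 \<otimes>\<^bsub>mekler p XX R\<^esub> h2 \<otimes>\<^bsub>mekler p XX R\<^esub> inv\<^bsub>mekler p XX R\<^esub> h1 \<otimes>\<^bsub>mekler p XX R\<^esub> inv\<^bsub>mekler p XX R\<^esub> h2"
    by blast
  show ?case using h by (simp add: psi_mult psi_inv mod_add_eq mod_minus_eq)
next
  case (inv h)
  then obtain h1 h2 where h: "h1 \<in> carrier (mekler p XX R)" "h2 \<in> carrier (mekler p XX R)"
    "h = h1 \<otimes>\<^bsub>mekler p XX R\<^esub> h2 \<otimes>\<^bsub>mekler p XX R\<^esub> inv\<^bsub>mekler p XX R\<^esub> h1 \<otimes>\<^bsub>mekler p XX R\<^esub> inv\<^bsub>mekler p XX R\<^esub> h2"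
    by blast
  have hc: "h \<in> carrier (mekler p XX R)" using h by simp
  have "psi a h = 0" using h by (simp add: psi_mult psi_inv mod_add_eq mod_minus_eq)
  thus ?case using hc by (simp add: psi_inv)
next
  case (eng h1 h2)
  have "h1 \<in> carrier (mekler p XX R)" "h2 \<in> carrier (mekler p XX R)"
    using eng(1,3) grp.generate_in_carrier[of "derived_set (mekler p XX R) (carrier (mekler p XX R))"]
    by auto
  thus ?case using eng by (simp add: psi_mult)
qed

end


lemma sw_step: "i \<le> k \<Longrightarrow> g \<in> carrier GA \<Longrightarrow> (\<forall>h\<in>carrier HA. spoiler_wins GA HA k r (pos(i := Some (g, h))))
   \<Longrightarrow> spoiler_wins GA HA k (Suc r) pos"
  by simp blast

context mk
begin

interpretation grp: group "mekler p XX R" by (rule group_G)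

lemma derived_cent: "derived (mekler p XX R) (carrier (mekler p XX R)) \<subseteq> cent (mekler p XX R)"
  unfolding derived_def
proof (rule grp.generate_subgroup_incl[OF _ grp.cent_subgroup])
  show "derived_set (mekler p XX R) (carrier (mekler p XX R)) \<subseteq> cent (mekler p XX R)"
  proof
    fix h assume "h \<in> derived_set (mekler p XX R) (carrier (mekler p XX R))"
    then obtain h1 h2 where h: "h1 \<in> carrier (mekler p XX R)" "h2 \<in> carrier (mekler p XX R)"
      "h = h1 \<otimes>\<^bsub>mekler p XX R\<^esub> h2 \<otimes>\<^bsub>mekler p XX R\<^esub> inv\<^bsub>mekler p XX R\<^esub> h1 \<otimes>\<^bsub>mekler p XX R\<^esub> inv\<^bsub>mekler p XX R\<^esub> h2"
      by blast
    hence "h = cmg (mekler p XX R) (inv\<^bsub>mekler p XX R\<^esub> h1) (inv\<^bsub>mekler p XX R\<^esub> h2)"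
      by (simp add: cmg_def)
    thus "h \<in> cent (mekler p XX R)" using h by (simp add: cm_cent)
  qed
qed

abbreviation FF where "FF vs d \<equiv> foldr (\<lambda>w acc. mgen p XX R w [^]\<^bsub>mekler p XX R\<^esub> (d w :: nat) \<otimes>\<^bsub>mekler p XX R\<^esub> acc) vs \<one>\<^bsub>mekler p XX R\<^esub>"

lemma mgen_gen: "mgen p XX R = gen" by (simp add: fun_eq_iff mgen_def gen_def)

lemma FF_carrier: "set vs \<subseteq> XX \<Longrightarrow> FF vs d \<in> carrier (mekler p XX R)"
  by (induct vs) (auto simp: mgen_gen)

lemma psi_FF: "set vs \<subseteq> XX \<Longrightarrow> distinct vs \<Longrightarrow> psi a (FF vs d) = (if a \<in> set vs then int (d a) else 0) mod int p"
proof (induct vs)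
  case Nil thus ?case by (simp add: psi_one)
next
  case (Cons w vs)
  hence w: "w \<in> XX" "set vs \<subseteq> XX" "distinct vs" "w \<notin> set vs" by auto
  have "psi a (FF (w # vs) d) = (psi a (gen w [^]\<^bsub>mekler p XX R\<^esub> d w) + psi a (FF vs d)) mod int p"
    using w by (simp add: mgen_gen psi_mult FF_carrier[simplified mgen_gen])
  also have "\<dots> = ((if w = a then int (d w) else 0) + (if a \<in> set vs then int (d a) else 0)) mod int p"
    using w Cons by (simp add: psi_gen_pow mod_add_eq)
  also have "\<dots> = (if a \<in> set (w # vs) then int (d a) else 0) mod int p"
    using w by auto
  finally show ?case .
qed

lemma FF_zero: "set vs \<subseteq> XX \<Longrightarrow> (\<forall>w\<in>set vs. d w = 0) \<Longrightarrow> FF vs d = \<one>\<^bsub>mekler p XX R\<^esub>"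
  by (induct vs) (auto simp: mgen_gen)

lemma FF_single: "set vs \<subseteq> XX \<Longrightarrow> distinct vs \<Longrightarrow> a \<in> set vs \<Longrightarrow> (\<forall>w\<in>set vs. w \<noteq> a \<longrightarrow> d w = 0)
   \<Longrightarrow> FF vs d = gen a [^]\<^bsub>mekler p XX R\<^esub> d a"
proof (induct vs)
  case Nil thus ?case by simp
next
  case (Cons w vs)
  show ?case
  proof (cases "w = a")
    case True
    hence "FF vs d = \<one>\<^bsub>mekler p XX R\<^esub>" using Cons.prems by (intro FF_zero) auto
    thus ?thesis using True Cons.prems by (simp add: mgen_gen)
  next
    case False
    have "a \<in> XX" using Cons.prems by auto
    thus ?thesis using Cons False by (simp add: mgen_gen FF_carrier[simplified mgen_gen])
  qed
qed

lemma msupp_psi: assumes a: "a \<in> msupp p XX R g" shows "psi a g \<noteq> 0"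
proof -
  obtain vs d c where w: "a \<in> XX" "distinct vs" "set vs = XX" "\<forall>w. d w < p" "d a \<noteq> 0"
    "c \<in> derived (mekler p XX R) (carrier (mekler p XX R))" "g = FF vs d \<otimes>\<^bsub>mekler p XX R\<^esub> c"
    using a unfolding msupp_def by blast
  have cc: "c \<in> carrier (mekler p XX R)" using w(6) derived_cent grp.cent_sub by blast
  have "psi a g = (psi a (FF vs d) + psi a c) mod int p"
    using w cc by (simp add: psi_mult FF_carrier)
  also have "\<dots> = int (d a) mod int p" using w psi_derived[OF w(6)] by (simp add: psi_FF)
  also have "\<dots> = int (d a)" using w(4) by simp
  finally show ?thesis using w(5) by simp
qed

lemma msupp_single: assumes a: "msupp p XX R g = {a}"
  shows "a \<in> XX \<and> (\<exists>k c. c \<in> cent (mekler p XX R) \<and> g = gen a [^]\<^bsub>mekler p XX R\<^esub> (k::nat) \<otimes>\<^bsub>mekler p XX R\<^esub> c)"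
proof -
  have "a \<in> msupp p XX R g" using a by simp
  then obtain vs d c where w: "a \<in> XX" "distinct vs" "set vs = XX" "\<forall>w. d w < p" "d a \<noteq> 0"
    "c \<in> derived (mekler p XX R) (carrier (mekler p XX R))" "g = FF vs d \<otimes>\<^bsub>mekler p XX R\<^esub> c"
    unfolding msupp_def by blast
  have z: "\<forall>w\<in>set vs. w \<noteq> a \<longrightarrow> d w = 0"
  proof (intro ballI impI)
    fix w assume "w \<in> set vs" "w \<noteq> a"
    show "d w = 0"
    proof (rule ccontr)
      assume "d w \<noteq> 0"
      hence "w \<in> msupp p XX R g" unfolding msupp_def using w \<open>w \<in> set vs\<close> by blast
      thus False using a \<open>w \<noteq> a\<close> by simp
    qed
  qed
  have "g = gen a [^]\<^bsub>mekler p XX R\<^esub> d a \<otimes>\<^bsub>mekler p XX R\<^esub> c"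
    using w z FF_single[of vs a d] by simp
  thus ?thesis using w derived_cent by blast
qed

end

context mkf
begin

interpretation grp: group "mekler p XX R" by (rule group_G)

lemma vside:
  assumes Rsym: "\<And>x y. R x y \<Longrightarrow> R y x"
  and C4: "\<And>s1 s2 i j. s1 \<noteq> s2 \<Longrightarrow> i \<noteq> j \<Longrightarrow> R s1 i \<Longrightarrow> R s2 i \<Longrightarrow> R s1 j \<Longrightarrow> R s2 j \<Longrightarrow> False"
  and v: "v \<in> carrier (mekler p XX R)" "s1 \<in> msupp p XX R v" "s2 \<in> msupp p XX R v" "s1 \<noteq> s2"
  and y: "y \<in> carrier (mekler p XX R)" "v \<otimes>\<^bsub>mekler p XX R\<^esub> y = y \<otimes>\<^bsub>mekler p XX R\<^esub> v"
  and z: "z \<in> carrier (mekler p XX R)" "v \<otimes>\<^bsub>mekler p XX R\<^esub> z = z \<otimes>\<^bsub>mekler p XX R\<^esub> v"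
  shows "y \<otimes>\<^bsub>mekler p XX R\<^esub> z = z \<otimes>\<^bsub>mekler p XX R\<^esub> y"
proof -
  define dv where "dv = rep v"
  define a where "a = rep y"
  define b where "b = rep z"
  have dv: "dv \<in> lists XX" "v = meq_class p XX R dv" using rep_spec[OF v(1)] dv_def by auto
  have a: "a \<in> lists XX" "y = meq_class p XX R a" using rep_spec[OF y(1)] a_def by auto
  have b: "b \<in> lists XX" "z = meq_class p XX R b" using rep_spec[OF z(1)] b_def by auto
  have s: "s1 \<in> XX" "s2 \<in> XX" using v by (auto simp: msupp_def)
  have ns: "\<not> int p dvd cnt s1 dv" "\<not> int p dvd cnt s2 dv"
    using msupp_psi[OF v(2)] msupp_psi[OF v(3)] by (auto simp: psi_def dv_def)
  have hd: "int p dvd (cnt i dv * cnt j a - cnt j dv * cnt i a)"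
    if "i \<in> XX" "j \<in> XX" "i \<noteq> j" "\<not> R i j" for i j
    using commute_cr[OF dv(1) a(1), of i j] y(2) dv a that Rsym by (auto simp: cr_def)
  have hf: "int p dvd (cnt i dv * cnt j b - cnt j dv * cnt i b)"
    if "i \<in> XX" "j \<in> XX" "i \<noteq> j" "\<not> R i j" for i j
    using commute_cr[OF dv(1) b(1), of i j] z(2) dv b that Rsym by (auto simp: cr_def)
  have qp: "Factorial_Ring.prime (int p)" using pp by simp
  have H: "int p dvd (cnt i a * cnt j b - cnt j a * cnt i b)"
    if "i \<in> XX" "j \<in> XX" "i \<noteq> j" "\<not> R i j" "\<not> R j i" for i j
    by (rule comb[of "int p" XX R "\<lambda>x. cnt x dv" "\<lambda>x. cnt x a" "\<lambda>x. cnt x b" s1 s2 i j])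
       (use qp C4 Rsym hd hf s ns v(4) that in blast)+
  show ?thesis using commute_words[OF a(1) b(1) H] a b by simp
qed

lemma main_game:
  assumes Rsym: "\<And>x y. R x y \<Longrightarrow> R y x"
  and C4: "\<And>s1 s2 i j. s1 \<noteq> s2 \<Longrightarrow> i \<noteq> j \<Longrightarrow> R s1 i \<Longrightarrow> R s2 i \<Longrightarrow> R s1 j \<Longrightarrow> R s2 j \<Longrightarrow> False"
  and nb: "\<And>a. a \<in> XX \<Longrightarrow> \<exists>n1 n2. n1 \<in> XX \<and> n2 \<in> XX \<and> n1 \<noteq> n2 \<and> R a n1 \<and> R a n2 \<and> \<not> R n1 n2"
  and u: "u \<in> carrier (mekler p XX R)" "card (msupp p XX R u) = 1"
  and v: "v \<in> carrier (mekler p XX R)" "card (msupp p XX R v) > 1"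
  shows "spoiler_wins (mekler p XX R) (mekler p XX R) 5 5 ((\<lambda>_. None)(0 := Some (u, v)))"
proof -
  obtain a where ma: "msupp p XX R u = {a}" using u(2) by (auto simp: card_1_singleton_iff)
  obtain k c where ac: "a \<in> XX" "c \<in> cent (mekler p XX R)" "u = gen a [^]\<^bsub>mekler p XX R\<^esub> (k::nat) \<otimes>\<^bsub>mekler p XX R\<^esub> c"
    using msupp_single[OF ma] by blast
  obtain n1 n2 where n: "n1 \<in> XX" "n2 \<in> XX" "n1 \<noteq> n2" "R a n1" "R a n2" "\<not> R n1 n2"
    using nb[OF ac(1)] by blast
  have n21: "\<not> R n2 n1" using n Rsym by blast
  obtain s1 s2 where s: "s1 \<in> msupp p XX R v" "s2 \<in> msupp p XX R v" "s1 \<noteq> s2"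
  proof -
    have "\<not> card (msupp p XX R v) \<le> Suc 0" using v(2) by simp
    moreover have "finite (msupp p XX R v)" using v(2) card.infinite by fastforce
    ultimately show ?thesis using that by (auto simp: card_le_Suc0_iff_eq)
  qed
  define G where "G = mekler p XX R"
  have cc: "c \<in> carrier G" using ac(2) grp.cent_sub by (auto simp: G_def)
  have comm_u: "u \<otimes>\<^bsub>G\<^esub> gen n = gen n \<otimes>\<^bsub>G\<^esub> u" if "n \<in> XX" "R a n" for n
  proof -
    have "gen a \<otimes>\<^bsub>G\<^esub> gen n = gen n \<otimes>\<^bsub>G\<^esub> gen a"
      using cm_edge[of a n] that ac(1) grp.cm_one_iff[of "gen a" "gen n"] by (simp add: G_def)
    hence e1: "gen a [^]\<^bsub>G\<^esub> k \<otimes>\<^bsub>G\<^esub> gen n = gen n \<otimes>\<^bsub>G\<^esub> gen a [^]\<^bsub>G\<^esub> k"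
      using grp.group_commutes_pow[of "gen a" "gen n" k] that ac(1) by (simp add: G_def)
    have e2: "c \<otimes>\<^bsub>G\<^esub> gen n = gen n \<otimes>\<^bsub>G\<^esub> c" using grp.centD[OF ac(2)] that by (simp add: G_def)
    have gc: "gen a [^]\<^bsub>G\<^esub> k \<in> carrier G" "gen n \<in> carrier G" using ac(1) that by (auto simp: G_def)
    have "u \<otimes>\<^bsub>G\<^esub> gen n = gen a [^]\<^bsub>G\<^esub> k \<otimes>\<^bsub>G\<^esub> (c \<otimes>\<^bsub>G\<^esub> gen n)"
      using ac(3) gc cc by (simp add: G_def grp.m_assoc)
    also have "\<dots> = (gen a [^]\<^bsub>G\<^esub> k \<otimes>\<^bsub>G\<^esub> gen n) \<otimes>\<^bsub>G\<^esub> c"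
      using e2 gc cc by (simp add: G_def grp.m_assoc)
    also have "\<dots> = gen n \<otimes>\<^bsub>G\<^esub> u"
      using e1 gc cc ac(3) by (simp add: G_def grp.m_assoc)
    finally show ?thesis .
  qed
  have gy: "gen n1 \<in> carrier G" "gen n2 \<in> carrier G" using n by (auto simp: G_def)
  have uc: "u \<in> carrier G" using u by (simp add: G_def)
  have ncomm: "gen n1 \<otimes>\<^bsub>G\<^esub> gen n2 \<noteq> gen n2 \<otimes>\<^bsub>G\<^esub> gen n1"
  proof
    assume "gen n1 \<otimes>\<^bsub>G\<^esub> gen n2 = gen n2 \<otimes>\<^bsub>G\<^esub> gen n1"
    hence "int p dvd cr n1 n2 [n1] [n2]"
      using commute_cr[of "[n1]" "[n2]" n1 n2] n n21 by (simp add: G_def gen_def)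
    hence "int p dvd 1" using n by (simp add: cr_def)
    thus False using p2 by simp
  qed
  let ?y = "gen n1" and ?z = "gen n2"
  have final: "\<not> pebble_ok G G ((\<lambda>_. None)(0 := Some (u, v), 1 := Some (?y, y'), 2 := Some (?z, z'),
     3 := Some (u \<otimes>\<^bsub>G\<^esub> ?y, w1), 4 := Some (u \<otimes>\<^bsub>G\<^esub> ?z, w2), 5 := Some (?y \<otimes>\<^bsub>G\<^esub> ?z, w3)))"
    if "y' \<in> carrier G" "z' \<in> carrier G" for y' z' w1 w2 w3
  proof
    assume ok: "pebble_ok G G ((\<lambda>_. None)(0 := Some (u, v), 1 := Some (?y, y'), 2 := Some (?z, z'),
     3 := Some (u \<otimes>\<^bsub>G\<^esub> ?y, w1), 4 := Some (u \<otimes>\<^bsub>G\<^esub> ?z, w2), 5 := Some (?y \<otimes>\<^bsub>G\<^esub> ?z, w3)))"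
    have A1: "v \<otimes>\<^bsub>G\<^esub> y' = w1" using ok[unfolded pebble_ok_def, rule_format, of 0 u v 1 ?y y' 3] by simp
    have A2: "y' \<otimes>\<^bsub>G\<^esub> v = w1" using ok[unfolded pebble_ok_def, rule_format, of 1 ?y y' 0 u v 3] comm_u[OF n(1) n(4)] by simp
    have B1: "v \<otimes>\<^bsub>G\<^esub> z' = w2" using ok[unfolded pebble_ok_def, rule_format, of 0 u v 2 ?z z' 4] by simp
    have B2: "z' \<otimes>\<^bsub>G\<^esub> v = w2" using ok[unfolded pebble_ok_def, rule_format, of 2 ?z z' 0 u v 4] comm_u[OF n(2) n(5)] by simp
    have C1: "y' \<otimes>\<^bsub>G\<^esub> z' = w3" using ok[unfolded pebble_ok_def, rule_format, of 1 ?y y' 2 ?z z' 5] by simp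
    have C2: "z' \<otimes>\<^bsub>G\<^esub> y' \<noteq> w3" using ok[unfolded pebble_ok_def, rule_format, of 2 ?z z' 1 ?y y' 5] ncomm by simp
    have "y' \<otimes>\<^bsub>G\<^esub> z' = z' \<otimes>\<^bsub>G\<^esub> y'"
      using vside[OF Rsym C4 v(1) s, where y=y' and z=z'] that A1 A2 B1 B2 by (simp add: G_def)
    thus False using C1 C2 by simp
  qed
  have m3: "u \<otimes>\<^bsub>G\<^esub> ?y \<in> carrier G" "u \<otimes>\<^bsub>G\<^esub> ?z \<in> carrier G" "?y \<otimes>\<^bsub>G\<^esub> ?z \<in> carrier G"
    using uc gy unfolding G_def by simp_all
  have e5: "(5::nat) = Suc (Suc (Suc (Suc (Suc 0))))" by simp
  show ?thesis unfolding G_def[symmetric]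
    apply (subst (2) e5)
    apply (rule sw_step[where i=1 and g="?y"], simp, simp add: gy, intro ballI)
    apply (rule sw_step[where i=2 and g="?z"], simp, simp add: gy, intro ballI)
    apply (rule sw_step[where i=3 and g="u \<otimes>\<^bsub>G\<^esub> ?y"], simp, simp add: m3, intro ballI)
    apply (rule sw_step[where i=4 and g="u \<otimes>\<^bsub>G\<^esub> ?z"], simp, simp add: m3, intro ballI)
    apply (rule sw_step[where i=5 and g="?y \<otimes>\<^bsub>G\<^esub> ?z"], simp, simp add: m3, intro ballI)
    using final by simp
qed

end


lemma loglog_bound: "(5::real) \<le> 5 * log 2 (log 2 (real n)) + 5"
proof (cases "n \<le> 1")
  case True
  hence "n = 0 \<or> n = 1" by auto
  thus ?thesis by (auto simp: log_def)
next
  case False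
  hence "real n \<ge> 2" by simp
  hence "log 2 (real n) \<ge> log 2 2" by (subst log_le_cancel_iff) auto
  hence "log 2 (real n) \<ge> 1" by simp
  hence "0 \<le> log 2 (log 2 (real n))" by (subst zero_le_log_cancel_iff) auto
  thus ?thesis by simp
qed

theorem lemma4p19:
  shows "\<exists>(k::nat) (C::real). \<forall>(p::nat) (V::nat set) (E::nat \<Rightarrow> nat \<Rightarrow> bool) (T::nat set set) u v.
    Factorial_Ring.prime p \<and> p > 2 \<and> simple_graph V E \<and> regular3 V E \<and> graph_connected V E
    \<and> (T = {} \<or> (\<exists>x y. E x y \<and> T = {{x, y}}))
    \<and> u \<in> carrier (mekler p (cfi_V V E) (cfi_E V E T))
    \<and> v \<in> carrier (mekler p (cfi_V V E) (cfi_E V E T))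
    \<and> card (msupp p (cfi_V V E) (cfi_E V E T) u) = 1
    \<and> card (msupp p (cfi_V V E) (cfi_E V E T) v) > 1
    \<longrightarrow> (\<exists>r::nat. real r \<le> C * log 2 (log 2 (real (card (carrier (mekler p (cfi_V V E) (cfi_E V E T)))))) + C
          \<and> spoiler_wins (mekler p (cfi_V V E) (cfi_E V E T)) (mekler p (cfi_V V E) (cfi_E V E T))
               k r ((\<lambda>_. None)(0 := Some (u, v))))"
proof (rule exI[of _ "5::nat"], rule exI[of _ "5::real"], intro allI impI)
  fix p :: nat and V :: "nat set" and E :: "nat \<Rightarrow> nat \<Rightarrow> bool" and T :: "nat set set" and u v
  assume H: "Factorial_Ring.prime p \<and> p > 2 \<and> simple_graph V E \<and> regular3 V E \<and> graph_connected V E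
    \<and> (T = {} \<or> (\<exists>x y. E x y \<and> T = {{x, y}}))
    \<and> u \<in> carrier (mekler p (cfi_V V E) (cfi_E V E T))
    \<and> v \<in> carrier (mekler p (cfi_V V E) (cfi_E V E T))
    \<and> card (msupp p (cfi_V V E) (cfi_E V E T) u) = 1
    \<and> card (msupp p (cfi_V V E) (cfi_E V E T) v) > 1"
  have sg: "simple_graph V E" and r3: "regular3 V E" using H by auto
  interpret M: mkf p "cfi_V V E" "cfi_E V E T"
    by unfold_locales (use H cfi_finite[OF sg] in auto)
  have sw: "spoiler_wins (mekler p (cfi_V V E) (cfi_E V E T)) (mekler p (cfi_V V E) (cfi_E V E T))
               5 5 ((\<lambda>_. None)(0 := Some (u, v)))"
  proof (rule M.main_game)
    show "\<And>x y. cfi_E V E T x y \<Longrightarrow> cfi_E V E T y x" by (rule cfi_sym)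
    show "\<And>s1 s2 i j. s1 \<noteq> s2 \<Longrightarrow> i \<noteq> j \<Longrightarrow> cfi_E V E T s1 i \<Longrightarrow> cfi_E V E T s2 i
       \<Longrightarrow> cfi_E V E T s1 j \<Longrightarrow> cfi_E V E T s2 j \<Longrightarrow> False"
      by (rule c4_free[OF sg r3])
    show "\<And>a. a \<in> cfi_V V E \<Longrightarrow> \<exists>n1 n2. n1 \<in> cfi_V V E \<and> n2 \<in> cfi_V V E \<and> n1 \<noteq> n2
       \<and> cfi_E V E T a n1 \<and> cfi_E V E T a n2 \<and> \<not> cfi_E V E T n1 n2"
      by (rule two_nbrs[OF sg r3])
  qed (use H in auto)
  show "\<exists>r::nat. real r \<le> 5 * log 2 (log 2 (real (card (carrier (mekler p (cfi_V V E) (cfi_E V E T)))))) + 5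
          \<and> spoiler_wins (mekler p (cfi_V V E) (cfi_E V E T)) (mekler p (cfi_V V E) (cfi_E V E T))
               5 r ((\<lambda>_. None)(0 := Some (u, v)))"
    using sw loglog_bound by (intro exI[of _ 5]) simp
qed


end
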